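(* (Generalized Multidimensional Fractional Noether's Theorem.) Let $n\ge1$, $\Omega_n=(a_1,b_1)\times\dots\times(a_n,b_n)$, and for $i=1,\dots,n$ let $\lambda_i,\mu_i\in\mathbb{R}$, $k_i\in L^1(0,b_i-a_i;\mathbb{R})$, and $K_{P_i},K_{P_i^*},A_{P_i^*},B_{P_i}$ be as in the context. Let $F:\mathbb{R}\times\mathbb{R}^{3n}\times\overline{\Omega}_n\to\mathbb{R}$ be of class $C^1$ and $(\star_y)(t)=(y(t),\nabla_{K_P}[y](t),\nabla[y](t),\nabla_{B_P}[y](t),t)$. Let $\phi:[-\varepsilon,\varepsilon]\times\overline{\Omega}_n\times\mathbb{R}\to\mathbb{R}$ be of class $C^2$ with $\phi(0,t,x)=x$, $\xi(t,x)=\frac{\partial\phi}{\partial\theta}(0,t,x)$ and $\hat y(t)=\phi(\theta,t,y(t))$. Suppose $F$ is invariant: $t\mapsto\xi(t,y(t))\in C^1(\overline{\Omega}_n;\mathbb{R})$ with $K_{P_i}[\xi(\cdot,y(\cdot))],B_{P_i}[\xi(\cdot,y(\cdot))]\in C(\overline{\Omega}_n;\mathbb{R})$, and $F(\star_y)(t)=F(\star_{\hat y})(t)$ for all $\theta\in[-\varepsilon,\varepsilon]$ and all $y\in C^1(\overline{\Omega}_n;\mathbb{R})$ with $K_{P_i}[y],B_{P_i}[y]\in C(\overline{\Omega}_n;\mathbb{R})$, $i=1,\dots,n$. Then for every generalized fractional extremal $y$ and $t\in\Omega_n$, $$\sum_{i=1}^n\Big(\mathbf{I}_i\big[\xi(\cdot,y(\cdot)),\partial_{1+i}F(\star_y)\big](t)+\frac{\partial}{\partial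 t_i}\big(\xi(t,y(t))\,\partial_{1+n+i}F(\star_y)(t)\big)+\mathbf{D}_i\big[\xi(\cdot,y(\cdot)),\partial_{1+2n+i}F(\star_y)\big](t)\Big)=0,$$ where $\mathbf{D}_i[f,g]=f\cdot A_{P_i^*}[g]+g\cdot B_{P_i}[f]$ and $\mathbf{I}_i[f,g]=-f\cdot K_{P_i^*}[g]+g\cdot K_{P_i}[f]$.
   Context: For $i=1,\dots,n$: $K_{P_i}[f](t)=\lambda_i\int_{a_i}^{t_i}k_i(t_i-\tau)f(t_1,..,\tau,..,t_n)d\tau+\mu_i\int_{t_i}^{b_i}k_i(\tau-t_i)f(t_1,..,\tau,..,t_n)d\tau$ ($\tau$ in the $i$-th slot); $K_{P_i^*}$ is the same with $\lambda_i,\mu_i$ interchanged; $A_{P_i^*}=\frac{\partial}{\partial t_i}\circ K_{P_i^*}$; $B_{P_i}=K_{P_i}\circ\frac{\partial}{\partial t_i}$; $\nabla_{K_P}[y]=(K_{P_1}[y],..,K_{P_n}[y])$, $\nabla_{B_P}[y]=(B_{P_1}[y],..,B_{P_n}[y])$. $F(x_1,x_2,x_3,x_4,t)$ with $x_1\in\mathbb{R}$, $x_2,x_3,x_4\in\mathbb{R}^n$; $\partial_jF$ is the partial derivative in the $j$-th scalar argument. A generalized fractional extremal is $y\in C^1(\overline{\Omega}_n;\mathbb{R})$ with $K_{P_i}[y],B_{P_i}[y]\in C(\overline{\Omega}_n;\mathbb{R})$ satisfying on $\Omega_n$ the equation $\partial_1F(\star_y)+\sum_{i=1}^n\big(K_{P_i^*}[\partial_{1+i}F(\star_y)]-\frac{\partial}{\partial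 t_i}\partial_{1+n+i}F(\star_y)-A_{P_i^*}[\partial_{1+2n+i}F(\star_y)]\big)=0$ (with $K_{P_i^*}[\partial_{1+i}F(\star_y)]$ continuous and $\partial_{1+n+i}F(\star_y)$, $K_{P_i^*}[\partial_{1+2n+i}F(\star_y)]$ continuously differentiable on $\overline{\Omega}_n$). *)

theory Defs
  imports "HOL-Analysis.Analysis"
begin

text \<open>Points of the closed box are vectors t :: real^'n; the box is cbox a b,
  its interior (the open box Omega_n) is box a b.\<close>

definition C1_on :: "'a::real_normed_vector set \<Rightarrow> ('a \<Rightarrow> 'b::real_normed_vector) \<Rightarrow> bool" where
  "C1_on S f \<longleftrightarrow> (\<exists>f' :: 'a \<Rightarrow> ('a \<Rightarrow>\<^sub>L 'b).
      (\<forall>x\<in>S. (f has_derivative blinfun_apply (f' x)) (at x within S)) \<and> continuous_on S f')"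

definition C2_on :: "'a::real_normed_vector set \<Rightarrow> ('a \<Rightarrow> 'b::real_normed_vector) \<Rightarrow> bool" where
  "C2_on S f \<longleftrightarrow> (\<exists>f' :: 'a \<Rightarrow> ('a \<Rightarrow>\<^sub>L 'b).
      (\<forall>x\<in>S. (f has_derivative blinfun_apply (f' x)) (at x within S)) \<and> C1_on S f')"

definition upd :: "real^'n \<Rightarrow> 'n \<Rightarrow> real \<Rightarrow> real^'n" where
  "upd t i s = (\<chi> j. if j = i then s else t $ j)"

text \<open>Partial derivative in t_i of a function on the closed box (one-sided at the faces).\<close>
definition pd :: "real^'n \<Rightarrow> real^'n \<Rightarrow> 'n \<Rightarrow> (real^'n \<Rightarrow> real) \<Rightarrow> real^'n \<Rightarrow> real" where
  "pd a b i f t = vector_derivative (\<lambda>s. f (upd t i s)) (at (t $ i) within {a $ i .. b $ i})"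

definition KP :: "real^'n \<Rightarrow> real^'n \<Rightarrow> 'n \<Rightarrow> real \<Rightarrow> real \<Rightarrow> (real \<Rightarrow> real)
                   \<Rightarrow> (real^'n \<Rightarrow> real) \<Rightarrow> real^'n \<Rightarrow> real" where
  "KP a b i lam mu ki f t =
     lam * integral {a $ i .. t $ i} (\<lambda>\<tau>. ki (t $ i - \<tau>) * f (upd t i \<tau>))
   + mu * integral {t $ i .. b $ i} (\<lambda>\<tau>. ki (\<tau> - t $ i) * f (upd t i \<tau>))"

definition KPs :: "real^'n \<Rightarrow> real^'n \<Rightarrow> 'n \<Rightarrow> real \<Rightarrow> real \<Rightarrow> (real \<Rightarrow> real)
                   \<Rightarrow> (real^'n \<Rightarrow> real) \<Rightarrow> real^'n \<Rightarrow> real" where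
  "KPs a b i lam mu ki f = KP a b i mu lam ki f"

definition APs :: "real^'n \<Rightarrow> real^'n \<Rightarrow> 'n \<Rightarrow> real \<Rightarrow> real \<Rightarrow> (real \<Rightarrow> real)
                   \<Rightarrow> (real^'n \<Rightarrow> real) \<Rightarrow> real^'n \<Rightarrow> real" where
  "APs a b i lam mu ki f = pd a b i (KPs a b i lam mu ki f)"

definition BP :: "real^'n \<Rightarrow> real^'n \<Rightarrow> 'n \<Rightarrow> real \<Rightarrow> real \<Rightarrow> (real \<Rightarrow> real)
                   \<Rightarrow> (real^'n \<Rightarrow> real) \<Rightarrow> real^'n \<Rightarrow> real" where
  "BP a b i lam mu ki f = KP a b i lam mu ki (pd a b i f)"

definition starv :: "real^'n \<Rightarrow> real^'n \<Rightarrow> ('n \<Rightarrow> real) \<Rightarrow> ('n \<Rightarrow> real) \<Rightarrow> ('n \<Rightarrow> real \<Rightarrow> real)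
     \<Rightarrow> (real^'n \<Rightarrow> real) \<Rightarrow> real^'n \<Rightarrow> real \<times> (real^'n) \<times> (real^'n) \<times> (real^'n) \<times> (real^'n)" where
  "starv a b lam mu k y t =
     (y t, (\<chi> i. KP a b i (lam i) (mu i) (k i) y t), (\<chi> i. pd a b i y t),
      (\<chi> i. BP a b i (lam i) (mu i) (k i) y t), t)"

text \<open>Partial derivatives of F(x1,x2,x3,x4,t) in the scalar arguments:
  dF1 = partial_1, dF2 i = partial_{1+i}, dF3 i = partial_{1+n+i}, dF4 i = partial_{1+2n+i}.\<close>
definition dF1 :: "(real \<times> (real^'n) \<times> (real^'n) \<times> (real^'n) \<times> (real^'n) \<Rightarrow> real)
                   \<Rightarrow> real \<times> (real^'n) \<times> (real^'n) \<times> (real^'n) \<times> (real^'n) \<Rightarrow> real" where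
  "dF1 F z = (case z of (x1, x2, x3, x4, t) \<Rightarrow> deriv (\<lambda>s. F (s, x2, x3, x4, t)) x1)"

definition dF2 :: "(real \<times> (real^'n) \<times> (real^'n) \<times> (real^'n) \<times> (real^'n) \<Rightarrow> real)
                   \<Rightarrow> 'n \<Rightarrow> real \<times> (real^'n) \<times> (real^'n) \<times> (real^'n) \<times> (real^'n) \<Rightarrow> real" where
  "dF2 F i z = (case z of (x1, x2, x3, x4, t) \<Rightarrow> deriv (\<lambda>s. F (x1, upd x2 i s, x3, x4, t)) (x2 $ i))"

definition dF3 :: "(real \<times> (real^'n) \<times> (real^'n) \<times> (real^'n) \<times> (real^'n) \<Rightarrow> real)
                   \<Rightarrow> 'n \<Rightarrow> real \<times> (real^'n) \<times> (real^'n) \<times> (real^'n) \<times> (real^'n) \<Rightarrow> real" where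
  "dF3 F i z = (case z of (x1, x2, x3, x4, t) \<Rightarrow> deriv (\<lambda>s. F (x1, x2, upd x3 i s, x4, t)) (x3 $ i))"

definition dF4 :: "(real \<times> (real^'n) \<times> (real^'n) \<times> (real^'n) \<times> (real^'n) \<Rightarrow> real)
                   \<Rightarrow> 'n \<Rightarrow> real \<times> (real^'n) \<times> (real^'n) \<times> (real^'n) \<times> (real^'n) \<Rightarrow> real" where
  "dF4 F i z = (case z of (x1, x2, x3, x4, t) \<Rightarrow> deriv (\<lambda>s. F (x1, x2, x3, upd x4 i s, t)) (x4 $ i))"

definition admissible :: "real^'n \<Rightarrow> real^'n \<Rightarrow> ('n \<Rightarrow> real) \<Rightarrow> ('n \<Rightarrow> real) \<Rightarrow> ('n \<Rightarrow> real \<Rightarrow> real)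
     \<Rightarrow> (real^'n \<Rightarrow> real) \<Rightarrow> bool" where
  "admissible a b lam mu k y \<longleftrightarrow> C1_on (cbox a b) y \<and>
     (\<forall>i. continuous_on (cbox a b) (KP a b i (lam i) (mu i) (k i) y) \<and>
          continuous_on (cbox a b) (BP a b i (lam i) (mu i) (k i) y))"

definition gen_frac_extremal :: "real^'n \<Rightarrow> real^'n \<Rightarrow> ('n \<Rightarrow> real) \<Rightarrow> ('n \<Rightarrow> real) \<Rightarrow> ('n \<Rightarrow> real \<Rightarrow> real)
     \<Rightarrow> (real \<times> (real^'n) \<times> (real^'n) \<times> (real^'n) \<times> (real^'n) \<Rightarrow> real) \<Rightarrow> (real^'n \<Rightarrow> real) \<Rightarrow> bool" where
  "gen_frac_extremal a b lam mu k F y \<longleftrightarrow>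
     admissible a b lam mu k y \<and>
     (\<forall>i. continuous_on (cbox a b)
            (KPs a b i (lam i) (mu i) (k i) (\<lambda>s. dF2 F i (starv a b lam mu k y s))) \<and>
          C1_on (cbox a b) (\<lambda>s. dF3 F i (starv a b lam mu k y s)) \<and>
          C1_on (cbox a b)
            (KPs a b i (lam i) (mu i) (k i) (\<lambda>s. dF4 F i (starv a b lam mu k y s)))) \<and>
     (\<forall>t\<in>box a b.
        dF1 F (starv a b lam mu k y t) +
        (\<Sum>i\<in>UNIV.
            KPs a b i (lam i) (mu i) (k i) (\<lambda>s. dF2 F i (starv a b lam mu k y s)) t
          - pd a b i (\<lambda>s. dF3 F i (starv a b lam mu k y s)) t
          - APs a b i (lam i) (mu i) (k i) (\<lambda>s. dF4 F i (starv a b lam mu k y s)) t) = 0)"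

definition xi :: "(real \<times> (real^'n) \<times> real \<Rightarrow> real) \<Rightarrow> real^'n \<Rightarrow> real \<Rightarrow> real" where
  "xi phi t x = deriv (\<lambda>\<theta>. phi (\<theta>, t, x)) 0"

definition DD :: "real^'n \<Rightarrow> real^'n \<Rightarrow> 'n \<Rightarrow> real \<Rightarrow> real \<Rightarrow> (real \<Rightarrow> real)
     \<Rightarrow> (real^'n \<Rightarrow> real) \<Rightarrow> (real^'n \<Rightarrow> real) \<Rightarrow> real^'n \<Rightarrow> real" where
  "DD a b i lam mu ki f g t = f t * APs a b i lam mu ki g t + g t * BP a b i lam mu ki f t"

definition II :: "real^'n \<Rightarrow> real^'n \<Rightarrow> 'n \<Rightarrow> real \<Rightarrow> real \<Rightarrow> (real \<Rightarrow> real)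
     \<Rightarrow> (real^'n \<Rightarrow> real) \<Rightarrow> (real^'n \<Rightarrow> real) \<Rightarrow> real^'n \<Rightarrow> real" where
  "II a b i lam mu ki f g t = - f t * KPs a b i lam mu ki g t + g t * KP a b i lam mu ki f t"

end

theory Submission
  imports Defs "HOL-Analysis.Analysis"
begin

lemma upd_nth: "upd r i s $ j = (if j = i then s else r $ j)"
  by (simp add: upd_def)

lemma upd_self[simp]: "upd r i (r $ i) = r"
  by (simp add: upd_def vec_eq_iff)

lemma upd_upd[simp]: "upd (upd r i s) i s' = upd r i s'"
  by (simp add: upd_def vec_eq_iff)

lemma upd_eq: "upd r i s = r + (s - r $ i) *\<^sub>R axis i 1"
  by (simp add: upd_def vec_eq_iff axis_def)

lemma upd_in_cbox: "r \<in> cbox a b \<Longrightarrow> s \<in> {a $ i .. b $ i} \<Longrightarrow> upd r i s \<in> cbox a b"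
  by (auto simp: mem_box_cart upd_nth)

lemma kern_left:
  fixes g :: "real \<Rightarrow> real"
  assumes g: "g absolutely_integrable_on {0..L}" and h: "a0 \<le> c" "c - a0 \<le> L"
  shows "(\<lambda>\<tau>. g (c - \<tau>)) absolutely_integrable_on {a0..c}"
    and "integral {a0..c} (\<lambda>\<tau>. \<bar>g (c - \<tau>)\<bar>) \<le> integral {0..L} (\<lambda>x. \<bar>g x\<bar>)"
proof -
  have g1: "g absolutely_integrable_on {0..c-a0}"
    using g h by (rule_tac absolutely_integrable_on_subinterval) auto
  then have g2: "(\<lambda>x. g (-x)) absolutely_integrable_on {-(c-a0)..-0}"
    by (simp only: absolutely_integrable_reflect_real)
  have e: "{-(c-a0) - (-c) .. -0 - (-c)} = {a0..c}" by auto
  have i1: "(\<lambda>x. g (-x)) integrable_on {-(c-a0)..-0}" and i2: "(\<lambda>x. \<bar>g (-x)\<bar>) integrable_on {-(c-a0)..-0}"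
    using g2 by (auto simp: absolutely_integrable_on_def)
  have "(\<lambda>x. g (-(x + -c))) integrable_on {a0..c}"
    using integrable_shift_real_ivl[OF i1, of "-c"] e by simp
  moreover have "(\<lambda>x. \<bar>g (-(x + -c))\<bar>) integrable_on {a0..c}"
    using integrable_shift_real_ivl[OF i2, of "-c"] e by simp
  ultimately show ai: "(\<lambda>\<tau>. g (c - \<tau>)) absolutely_integrable_on {a0..c}"
    by (simp add: absolutely_integrable_on_def)
  have "integral {a0..c} (\<lambda>\<tau>. \<bar>g (c - \<tau>)\<bar>) = integral {-(c-a0)..-0} (\<lambda>x. \<bar>g (-x)\<bar>)"
    using integral_shift_real_ivl[of "-(c-a0)" "-c" "-0" "\<lambda>x. \<bar>g (-x)\<bar>"] e by simp
  also have "\<dots> = integral {0..c-a0} (\<lambda>x. \<bar>g x\<bar>)"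
    using Henstock_Kurzweil_Integration.integral_reflect_real[of "c-a0" 0 "\<lambda>x. \<bar>g x\<bar>"] by simp
  also have "\<dots> \<le> integral {0..L} (\<lambda>x. \<bar>g x\<bar>)"
    apply (rule integral_subset_le)
    using g g1 h by (auto simp: absolutely_integrable_on_def)
  finally show "integral {a0..c} (\<lambda>\<tau>. \<bar>g (c - \<tau>)\<bar>) \<le> integral {0..L} (\<lambda>x. \<bar>g x\<bar>)" .
qed

lemma kern_right:
  fixes g :: "real \<Rightarrow> real"
  assumes g: "g absolutely_integrable_on {0..L}" and h: "c \<le> b0" "b0 - c \<le> L"
  shows "(\<lambda>\<tau>. g (\<tau> - c)) absolutely_integrable_on {c..b0}"
    and "integral {c..b0} (\<lambda>\<tau>. \<bar>g (\<tau> - c)\<bar>) \<le> integral {0..L} (\<lambda>x. \<bar>g x\<bar>)"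
proof -
  have g1: "g absolutely_integrable_on {0..b0-c}"
    using g h by (rule_tac absolutely_integrable_on_subinterval) auto
  have e: "{0 - (-c) .. (b0 - c) - (-c)} = {c..b0}" by auto
  have i1: "g integrable_on {0..b0-c}" and i2: "(\<lambda>x. \<bar>g x\<bar>) integrable_on {0..b0-c}"
    using g1 by (auto simp: absolutely_integrable_on_def)
  have "(\<lambda>x. g (x + -c)) integrable_on {c..b0}"
    using integrable_shift_real_ivl[OF i1, of "-c"] e by simp
  moreover have "(\<lambda>x. \<bar>g (x + -c)\<bar>) integrable_on {c..b0}"
    using integrable_shift_real_ivl[OF i2, of "-c"] e by simp
  ultimately show "(\<lambda>\<tau>. g (\<tau> - c)) absolutely_integrable_on {c..b0}"
    by (simp add: absolutely_integrable_on_def)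
  have "integral {c..b0} (\<lambda>\<tau>. \<bar>g (\<tau> - c)\<bar>) = integral {0..b0-c} (\<lambda>x. \<bar>g x\<bar>)"
    using integral_shift_real_ivl[of 0 "-c" "b0-c" "\<lambda>x. \<bar>g x\<bar>"] e by simp
  also have "\<dots> \<le> integral {0..L} (\<lambda>x. \<bar>g x\<bar>)"
    apply (rule integral_subset_le)
    using g g1 h by (auto simp: absolutely_integrable_on_def)
  finally show "integral {c..b0} (\<lambda>\<tau>. \<bar>g (\<tau> - c)\<bar>) \<le> integral {0..L} (\<lambda>x. \<bar>g x\<bar>)" .
qed

lemma cont_line: "continuous_on (cbox a b) f \<Longrightarrow> t \<in> cbox a b \<Longrightarrow>
   continuous_on {a $ i .. b $ i} (\<lambda>\<tau>. f (upd t i \<tau>))"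
  apply (rule continuous_on_compose2[of "cbox a b" f])
    apply assumption
   apply (simp add: upd_eq, intro continuous_intros)
  using upd_in_cbox by blast

lemma KP_int:
  fixes a b t :: "real^'n" and f :: "real^'n \<Rightarrow> real"
  assumes ki: "ki absolutely_integrable_on {0..b$i - a$i}" and t: "t \<in> cbox a b"
    and f: "continuous_on (cbox a b) f"
  shows "(\<lambda>\<tau>. ki (t$i - \<tau>) * f (upd t i \<tau>)) absolutely_integrable_on {a$i..t$i}"
    and "(\<lambda>\<tau>. ki (\<tau> - t$i) * f (upd t i \<tau>)) absolutely_integrable_on {t$i..b$i}"
proof -
  have ti: "a$i \<le> t$i" "t$i \<le> b$i" using t by (auto simp: mem_box_cart)
  have c: "continuous_on {a $ i .. b $ i} (\<lambda>\<tau>. f (upd t i \<tau>))" using cont_line[OF f t] .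
  have c1: "continuous_on {a $ i .. t $ i} (\<lambda>\<tau>. f (upd t i \<tau>))"
    by (rule continuous_on_subset[OF c]) (use ti in auto)
  have c2: "continuous_on {t $ i .. b $ i} (\<lambda>\<tau>. f (upd t i \<tau>))"
    by (rule continuous_on_subset[OF c]) (use ti in auto)
  have "(\<lambda>\<tau>. f (upd t i \<tau>) * ki (t$i - \<tau>)) absolutely_integrable_on {a$i..t$i}"
    apply (rule absolutely_integrable_bounded_measurable_product_real)
       apply (rule continuous_imp_measurable_on_sets_lebesgue[OF c1], simp)
      apply simp
     apply (rule compact_imp_bounded, rule compact_continuous_image[OF c1], simp)
    apply (rule kern_left(1)[OF ki]) using ti by auto
  then show "(\<lambda>\<tau>. ki (t$i - \<tau>) * f (upd t i \<tau>)) absolutely_integrable_on {a$i..t$i}"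
    by (simp add: mult.commute)
  have "(\<lambda>\<tau>. f (upd t i \<tau>) * ki (\<tau> - t$i)) absolutely_integrable_on {t$i..b$i}"
    apply (rule absolutely_integrable_bounded_measurable_product_real)
       apply (rule continuous_imp_measurable_on_sets_lebesgue[OF c2], simp)
      apply simp
     apply (rule compact_imp_bounded, rule compact_continuous_image[OF c2], simp)
    apply (rule kern_right(1)[OF ki]) using ti by auto
  then show "(\<lambda>\<tau>. ki (\<tau> - t$i) * f (upd t i \<tau>)) absolutely_integrable_on {t$i..b$i}"
    by (simp add: mult.commute)
qed

lemma KP_bound:
  fixes a b t :: "real^'n" and f :: "real^'n \<Rightarrow> real"
  assumes ki: "ki absolutely_integrable_on {0..b$i - a$i}" and t: "t \<in> cbox a b"
    and f: "continuous_on (cbox a b) f" and B: "\<forall>r\<in>cbox a b. \<bar>f r\<bar> \<le> B"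
  shows "\<bar>KP a b i l m ki f t\<bar> \<le> (\<bar>l\<bar> + \<bar>m\<bar>) * integral {0..b$i - a$i} (\<lambda>x. \<bar>ki x\<bar>) * B"
proof -
  define KM where "KM = integral {0..b$i - a$i} (\<lambda>x. \<bar>ki x\<bar>)"
  have ti: "a$i \<le> t$i" "t$i \<le> b$i" using t by (auto simp: mem_box_cart)
  have B0: "0 \<le> B" using B t by force
  note i1 = KP_int(1)[OF ki t f] and i2 = KP_int(2)[OF ki t f]
  have k1: "(\<lambda>\<tau>. ki (t$i - \<tau>)) absolutely_integrable_on {a$i..t$i}"
    and k1b: "integral {a$i..t$i} (\<lambda>\<tau>. \<bar>ki (t$i - \<tau>)\<bar>) \<le> KM"
    using kern_left[OF ki, of "a$i" "t$i"] ti unfolding KM_def by auto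
  have k2: "(\<lambda>\<tau>. ki (\<tau> - t$i)) absolutely_integrable_on {t$i..b$i}"
    and k2b: "integral {t$i..b$i} (\<lambda>\<tau>. \<bar>ki (\<tau> - t$i)\<bar>) \<le> KM"
    using kern_right[OF ki, of "t$i" "b$i"] ti unfolding KM_def by auto
  have I1: "\<bar>integral {a$i..t$i} (\<lambda>\<tau>. ki (t$i - \<tau>) * f (upd t i \<tau>))\<bar> \<le> KM * B"
  proof -
    have "\<bar>integral {a$i..t$i} (\<lambda>\<tau>. ki (t$i - \<tau>) * f (upd t i \<tau>))\<bar>
        \<le> integral {a$i..t$i} (\<lambda>\<tau>. \<bar>ki (t$i - \<tau>)\<bar> * B)"
      apply (rule integral_norm_bound_integral[where f="\<lambda>\<tau>. ki (t$i - \<tau>) * f (upd t i \<tau>)", simplified])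
      using i1 apply (simp add: absolutely_integrable_on_def)
      using k1 apply (simp add: absolutely_integrable_on_def integrable_on_mult_left)
      apply (simp only: abs_mult)
      apply (rule mult_left_mono)
      using B upd_in_cbox[OF t] ti apply (meson atLeastAtMost_iff order_trans)
      by simp
    also have "\<dots> = integral {a$i..t$i} (\<lambda>\<tau>. \<bar>ki (t$i - \<tau>)\<bar>) * B" by simp
    also have "\<dots> \<le> KM * B" using k1b B0 by (rule mult_right_mono)
    finally show ?thesis .
  qed
  have I2: "\<bar>integral {t$i..b$i} (\<lambda>\<tau>. ki (\<tau> - t$i) * f (upd t i \<tau>))\<bar> \<le> KM * B"
  proof -
    have "\<bar>integral {t$i..b$i} (\<lambda>\<tau>. ki (\<tau> - t$i) * f (upd t i \<tau>))\<bar>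
        \<le> integral {t$i..b$i} (\<lambda>\<tau>. \<bar>ki (\<tau> - t$i)\<bar> * B)"
      apply (rule integral_norm_bound_integral[where f="\<lambda>\<tau>. ki (\<tau> - t$i) * f (upd t i \<tau>)", simplified])
      using i2 apply (simp add: absolutely_integrable_on_def)
      using k2 apply (simp add: absolutely_integrable_on_def integrable_on_mult_left)
      apply (simp only: abs_mult)
      apply (rule mult_left_mono)
      using B upd_in_cbox[OF t] ti apply (meson atLeastAtMost_iff order_trans)
      by simp
    also have "\<dots> = integral {t$i..b$i} (\<lambda>\<tau>. \<bar>ki (\<tau> - t$i)\<bar>) * B" by simp
    also have "\<dots> \<le> KM * B" using k2b B0 by (rule mult_right_mono)
    finally show ?thesis .
  qed
  have "\<bar>KP a b i l m ki f t\<bar> \<le> \<bar>l\<bar> * (KM * B) + \<bar>m\<bar> * (KM * B)"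
    unfolding KP_def
    by (rule order_trans[OF abs_triangle_ineq]) (simp add: abs_mult add_mono mult_left_mono I1 I2)
  then show ?thesis unfolding KM_def by (simp add: algebra_simps)
qed

lemma KP_lin:
  fixes a b t :: "real^'n" and f g h :: "real^'n \<Rightarrow> real"
  assumes ki: "ki absolutely_integrable_on {0..b$i - a$i}" and t: "t \<in> cbox a b"
    and f: "continuous_on (cbox a b) f" and g: "continuous_on (cbox a b) g"
    and h: "continuous_on (cbox a b) h"
  shows "KP a b i l m ki (\<lambda>r. f r - g r - c * h r) t = KP a b i l m ki f t - KP a b i l m ki g t - c * KP a b i l m ki h t"
proof -
  have L: "integral S (\<lambda>\<tau>. K \<tau> * (F \<tau> - G \<tau> - c * H \<tau>))
     = integral S (\<lambda>\<tau>. K \<tau> * F \<tau>) - integral S (\<lambda>\<tau>. K \<tau> * G \<tau>) - c * integral S (\<lambda>\<tau>. K \<tau> * H \<tau>)"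
    if "(\<lambda>\<tau>. K \<tau> * F \<tau>) absolutely_integrable_on S" "(\<lambda>\<tau>. K \<tau> * G \<tau>) absolutely_integrable_on S"
       "(\<lambda>\<tau>. K \<tau> * H \<tau>) absolutely_integrable_on S" for S K F G H
  proof -
    have i: "(\<lambda>\<tau>. K \<tau> * F \<tau>) integrable_on S" "(\<lambda>\<tau>. K \<tau> * G \<tau>) integrable_on S"
       "(\<lambda>\<tau>. c * (K \<tau> * H \<tau>)) integrable_on S"
      using that by (auto simp: absolutely_integrable_on_def intro: integrable_on_mult_right)
    have "(\<lambda>\<tau>. K \<tau> * (F \<tau> - G \<tau> - c * H \<tau>)) = (\<lambda>\<tau>. (K \<tau> * F \<tau> - K \<tau> * G \<tau>) - c * (K \<tau> * H \<tau>))"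
      by (auto simp: algebra_simps)
    then have "integral S (\<lambda>\<tau>. K \<tau> * (F \<tau> - G \<tau> - c * H \<tau>)) =
      integral S (\<lambda>\<tau>. K \<tau> * F \<tau> - K \<tau> * G \<tau>) - integral S (\<lambda>\<tau>. c * (K \<tau> * H \<tau>))"
      using i by (simp add: integral_diff integrable_diff)
    also have "\<dots> = integral S (\<lambda>\<tau>. K \<tau> * F \<tau>) - integral S (\<lambda>\<tau>. K \<tau> * G \<tau>) - c * integral S (\<lambda>\<tau>. K \<tau> * H \<tau>)"
      using i by (simp add: integral_diff)
    finally show ?thesis .
  qed
  have e1: "integral {a$i..t$i} (\<lambda>\<tau>. ki (t$i - \<tau>) * (f (upd t i \<tau>) - g (upd t i \<tau>) - c * h (upd t i \<tau>)))
     = integral {a$i..t$i} (\<lambda>\<tau>. ki (t$i - \<tau>) * f (upd t i \<tau>)) - integral {a$i..t$i} (\<lambda>\<tau>. ki (t$i - \<tau>) * g (upd t i \<tau>))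
       - c * integral {a$i..t$i} (\<lambda>\<tau>. ki (t$i - \<tau>) * h (upd t i \<tau>))"
    by (rule L[OF KP_int(1)[OF ki t f] KP_int(1)[OF ki t g] KP_int(1)[OF ki t h]])
  have e2: "integral {t$i..b$i} (\<lambda>\<tau>. ki (\<tau> - t$i) * (f (upd t i \<tau>) - g (upd t i \<tau>) - c * h (upd t i \<tau>)))
     = integral {t$i..b$i} (\<lambda>\<tau>. ki (\<tau> - t$i) * f (upd t i \<tau>)) - integral {t$i..b$i} (\<lambda>\<tau>. ki (\<tau> - t$i) * g (upd t i \<tau>))
       - c * integral {t$i..b$i} (\<lambda>\<tau>. ki (\<tau> - t$i) * h (upd t i \<tau>))"
    by (rule L[OF KP_int(2)[OF ki t f] KP_int(2)[OF ki t g] KP_int(2)[OF ki t h]])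
  show ?thesis unfolding KP_def e1 e2 by (simp add: algebra_simps)
qed

lemma ev_in_within: "eventually (\<lambda>x. x \<in> T) (at x0 within T)"
  by (simp add: eventually_at_filter)

lemma KP_deriv:
  fixes a b t :: "real^'n" and w :: "real \<Rightarrow> real^'n \<Rightarrow> real" and v :: "real^'n \<Rightarrow> real"
  assumes ki: "ki absolutely_integrable_on {0..b$i - a$i}" and t: "t \<in> cbox a b"
    and wc: "\<forall>\<theta>\<in>T. continuous_on (cbox a b) (w \<theta>)" and vc: "continuous_on (cbox a b) v"
    and T0: "0 \<in> T"
    and unif: "\<forall>e>0. \<forall>\<^sub>F \<theta> in at 0 within T. \<forall>r\<in>cbox a b. \<bar>w \<theta> r - w 0 r - \<theta> * v r\<bar> \<le> e * \<bar>\<theta>\<bar>"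
  shows "((\<lambda>\<theta>. KP a b i l m ki (w \<theta>) t) has_derivative (\<lambda>h. h * KP a b i l m ki v t)) (at 0 within T)"
  unfolding has_derivative_within_alt2
proof (intro conjI allI impI)
  show "bounded_linear (\<lambda>h. h * KP a b i l m ki v t)" by (simp add: bounded_linear_mult_left)
  fix e :: real assume e: "e > 0"
  define KM where "KM = integral {0..b$i - a$i} (\<lambda>x. \<bar>ki x\<bar>)"
  define C where "C = (\<bar>l\<bar> + \<bar>m\<bar>) * KM + 1"
  have KM0: "KM \<ge> 0" unfolding KM_def by (rule integral_nonneg) (use ki in \<open>auto simp: absolutely_integrable_on_def\<close>)
  have C0: "C > 0" unfolding C_def using KM0 by (smt (verit) abs_ge_zero mult_nonneg_nonneg)
  have "\<forall>\<^sub>F \<theta> in at 0 within T. \<theta> \<in> T \<and> (\<forall>r\<in>cbox a b. \<bar>w \<theta> r - w 0 r - \<theta> * v r\<bar> \<le> (e / C) * \<bar>\<theta>\<bar>)"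
  proof (rule eventually_conj[OF ev_in_within])
    show "\<forall>\<^sub>F \<theta> in at 0 within T. \<forall>r\<in>cbox a b. \<bar>w \<theta> r - w 0 r - \<theta> * v r\<bar> \<le> (e / C) * \<bar>\<theta>\<bar>"
      using unif[rule_format, of "e / C"] e C0 by simp
  qed
  then show "\<forall>\<^sub>F \<theta> in at 0 within T. norm (KP a b i l m ki (w \<theta>) t - KP a b i l m ki (w 0) t - (\<theta> - 0) * KP a b i l m ki v t) \<le> e * norm (\<theta> - 0)"
  proof eventually_elim
    case (elim \<theta>)
    then have wt: "continuous_on (cbox a b) (w \<theta>)" and w0: "continuous_on (cbox a b) (w 0)" using wc T0 by auto
    have "KP a b i l m ki (w \<theta>) t - KP a b i l m ki (w 0) t - \<theta> * KP a b i l m ki v t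
        = KP a b i l m ki (\<lambda>r. w \<theta> r - w 0 r - \<theta> * v r) t"
      using KP_lin[OF ki t wt w0 vc] by simp
    also have "\<bar>\<dots>\<bar> \<le> (\<bar>l\<bar> + \<bar>m\<bar>) * KM * ((e / C) * \<bar>\<theta>\<bar>)"
      unfolding KM_def
      by (rule KP_bound[OF ki t]) (use elim in \<open>auto intro!: continuous_intros wt w0 vc\<close>)
    also have "\<dots> \<le> C * ((e / C) * \<bar>\<theta>\<bar>)"
      by (rule mult_right_mono) (use e C0 in \<open>auto simp: C_def\<close>)
    also have "\<dots> = e * \<bar>\<theta>\<bar>" using C0 by simp
    finally show ?case by simp
  qed
qed

lemma unif_diff:
  fixes g :: "real \<Rightarrow> 'c \<Rightarrow> 'b::real_normed_vector" and g' :: "real \<Rightarrow> 'c \<Rightarrow> 'b"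
  assumes eps: "0 < \<epsilon>"
    and der: "\<forall>c\<in>C. \<forall>s\<in>{-\<epsilon>..\<epsilon>}. ((\<lambda>\<theta>. g \<theta> c) has_derivative (\<lambda>h. h *\<^sub>R g' s c)) (at s within {-\<epsilon>..\<epsilon>})"
    and uc: "\<forall>e>0. \<exists>d>0. \<forall>c\<in>C. \<forall>s\<in>{-\<epsilon>..\<epsilon>}. \<bar>s\<bar> < d \<longrightarrow> norm (g' s c - g' 0 c) \<le> e"
  shows "\<forall>e>0. \<forall>\<^sub>F \<theta> in at 0 within {-\<epsilon>..\<epsilon>}. \<forall>c\<in>C. norm (g \<theta> c - g 0 c - \<theta> *\<^sub>R g' 0 c) \<le> e * \<bar>\<theta>\<bar>"
proof (intro allI impI)
  fix e :: real assume e: "e > 0"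
  obtain d where d: "d > 0" "\<forall>c\<in>C. \<forall>s\<in>{-\<epsilon>..\<epsilon>}. \<bar>s\<bar> < d \<longrightarrow> norm (g' s c - g' 0 c) \<le> e"
    using uc e by blast
  show "\<forall>\<^sub>F \<theta> in at 0 within {-\<epsilon>..\<epsilon>}. \<forall>c\<in>C. norm (g \<theta> c - g 0 c - \<theta> *\<^sub>R g' 0 c) \<le> e * \<bar>\<theta>\<bar>"
    unfolding eventually_at
  proof (intro exI[of _ d] conjI ballI impI)
    show "d > 0" by (rule d)
    fix \<theta> c assume th: "\<theta> \<in> {-\<epsilon>..\<epsilon>}" "\<theta> \<noteq> 0 \<and> dist \<theta> 0 < d" and c: "c \<in> C"
    define S where "S = closed_segment 0 \<theta>"
    have S: "S \<subseteq> {-\<epsilon>..\<epsilon>}" unfolding S_def using th eps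
      by (auto simp: closed_segment_eq_real_ivl split: if_splits)
    have Sd: "\<bar>s\<bar> \<le> \<bar>\<theta>\<bar>" if "s \<in> S" for s using that unfolding S_def
      by (auto simp: closed_segment_eq_real_ivl split: if_splits)
    have "norm ((\<lambda>\<theta>. g \<theta> c) \<theta> - (\<lambda>\<theta>. g \<theta> c) 0 - (\<lambda>h. h *\<^sub>R g' 0 c) (\<theta> - 0)) \<le> norm (\<theta> - 0) * e"
    proof (rule differentiable_bound_linearization[where S=S and f'="\<lambda>s h. h *\<^sub>R g' s c"])
      show "0 + t *\<^sub>R (\<theta> - 0) \<in> S" if "t \<in> {0..1}" for t
        unfolding S_def using that by (auto simp: in_segment)
      show "((\<lambda>\<theta>. g \<theta> c) has_derivative (\<lambda>h. h *\<^sub>R g' s c)) (at s within S)" if "s \<in> S" for s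
        using der c that S by (meson has_derivative_subset subsetD)
      show "onorm ((\<lambda>h. h *\<^sub>R g' s c) - (\<lambda>h. h *\<^sub>R g' 0 c)) \<le> e" if "s \<in> S" for s
      proof (rule onorm_le)
        fix h :: real
        have "norm (g' s c - g' 0 c) \<le> e" using d(2) c that S Sd th by force
        then show "norm (((\<lambda>h. h *\<^sub>R g' s c) - (\<lambda>h. h *\<^sub>R g' 0 c)) h) \<le> e * norm h"
          by (simp add: scaleR_diff_right[symmetric] mult.commute[of e] mult_left_mono)
      qed
    qed (simp add: S_def)
    then show "norm (g \<theta> c - g 0 c - \<theta> *\<^sub>R g' 0 c) \<le> e * \<bar>\<theta>\<bar>" by (simp add: mult.commute)
  qed
qed

lemma KP_cong:
  assumes t: "t \<in> cbox a b" and fg: "\<forall>r\<in>cbox a b. f r = g r"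
  shows "KP a b i l m ki f t = KP a b i l m ki g t"
proof -
  have ti: "a$i \<le> t$i" "t$i \<le> b$i" using t by (auto simp: mem_box_cart)
  have "\<forall>\<tau>\<in>{a$i..t$i}. f (upd t i \<tau>) = g (upd t i \<tau>)" "\<forall>\<tau>\<in>{t$i..b$i}. f (upd t i \<tau>) = g (upd t i \<tau>)"
    using fg upd_in_cbox[OF t] ti by auto
  then have "integral {a$i..t$i} (\<lambda>\<tau>. ki (t$i - \<tau>) * f (upd t i \<tau>)) = integral {a$i..t$i} (\<lambda>\<tau>. ki (t$i - \<tau>) * g (upd t i \<tau>))"
     "integral {t$i..b$i} (\<lambda>\<tau>. ki (\<tau> - t$i) * f (upd t i \<tau>)) = integral {t$i..b$i} (\<lambda>\<tau>. ki (\<tau> - t$i) * g (upd t i \<tau>))"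
    by (auto intro!: integral_cong)
  then show ?thesis unfolding KP_def by simp
qed

lemma pd_cong:
  assumes t: "t \<in> cbox a b" and fg: "\<forall>r\<in>cbox a b. f r = g r"
  shows "pd a b i f t = pd a b i g t"
proof -
  have ti: "t$i \<in> {a$i..b$i}" using t by (auto simp: mem_box_cart)
  have eq: "\<And>s. s \<in> {a$i..b$i} \<Longrightarrow> f (upd t i s) = g (upd t i s)"
    using fg upd_in_cbox[OF t] by auto
  have "((\<lambda>s. f (upd t i s)) has_vector_derivative D) (at (t$i) within {a$i..b$i}) \<longleftrightarrow>
        ((\<lambda>s. g (upd t i s)) has_vector_derivative D) (at (t$i) within {a$i..b$i})" for D
    using has_vector_derivative_transform_within[of _ D "t$i" "{a$i..b$i}" 1] eq ti by auto
  then show ?thesis unfolding pd_def vector_derivative_def by simp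
qed

lemma BP_cong:
  assumes t: "t \<in> cbox a b" and fg: "\<forall>r\<in>cbox a b. f r = g r"
  shows "BP a b i l m ki f t = BP a b i l m ki g t"
  unfolding BP_def by (rule KP_cong[OF t]) (use pd_cong fg in blast)

lemma starv_cong:
  assumes t: "t \<in> cbox a b" and fg: "\<forall>r\<in>cbox a b. f r = g r"
  shows "starv a b lam mu k f t = starv a b lam mu k g t"
  unfolding starv_def using KP_cong[OF t fg] pd_cong[OF t fg] BP_cong[OF t fg] fg t by simp

lemma line_deriv:
  fixes r :: "real^'n"
  shows "((\<lambda>s. upd r i s) has_derivative (\<lambda>h. h *\<^sub>R axis i 1)) (at s within S)"
  unfolding upd_eq by (auto intro!: derivative_eq_intros)

lemma pd_C1:
  fixes A :: "real^'n \<Rightarrow> real"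
  assumes ab: "a$i < b$i" and A: "C1_on (cbox a b) A" and t: "t \<in> cbox a b"
  shows "((\<lambda>s. A (upd t i s)) has_real_derivative pd a b i A t) (at (t$i) within {a$i..b$i})"
proof -
  obtain A' where A': "\<forall>x\<in>cbox a b. (A has_derivative blinfun_apply (A' x)) (at x within cbox a b)"
    using A unfolding C1_on_def by blast
  have ti: "t$i \<in> {a$i..b$i}" using t by (auto simp: mem_box_cart)
  have "((\<lambda>s. A (upd t i s)) has_derivative (\<lambda>h. blinfun_apply (A' (upd t i (t$i))) (h *\<^sub>R axis i 1))) (at (t$i) within {a$i..b$i})"
    apply (rule has_derivative_in_compose2[of "cbox a b" A "\<lambda>x. blinfun_apply (A' x)"])
    using A' apply blast
    using upd_in_cbox[OF t] apply blast
     apply (rule ti)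
    by (rule line_deriv)
  then have d: "((\<lambda>s. A (upd t i s)) has_real_derivative blinfun_apply (A' t) (axis i 1)) (at (t$i) within {a$i..b$i})"
    by (rule has_derivative_imp_has_field_derivative) (simp add: blinfun.scaleR_right)
  then have "pd a b i A t = blinfun_apply (A' t) (axis i 1)"
    unfolding pd_def using vector_derivative_within_cbox[of "a$i" "b$i" "t$i"] ab ti
    by (simp add: has_real_derivative_iff_has_vector_derivative)
  then show ?thesis using d by simp
qed

lemma pd_mult:
  fixes A B :: "real^'n \<Rightarrow> real"
  assumes ab: "a$i < b$i" and A: "C1_on (cbox a b) A" and B: "C1_on (cbox a b) B" and t: "t \<in> cbox a b"
  shows "pd a b i (\<lambda>s. A s * B s) t = pd a b i A t * B t + A t * pd a b i B t"
proof -
  have ti: "t$i \<in> {a$i..b$i}" using t by (auto simp: mem_box_cart)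
  have "((\<lambda>s. A (upd t i s) * B (upd t i s)) has_real_derivative
       pd a b i A t * B (upd t i (t$i)) + A (upd t i (t$i)) * pd a b i B t) (at (t$i) within {a$i..b$i})"
    using DERIV_mult'[OF pd_C1[OF ab A t] pd_C1[OF ab B t]] by (simp add: algebra_simps)
  then show ?thesis
    unfolding pd_def using vector_derivative_within_cbox[of "a$i" "b$i" "t$i"] ab ti
    by (simp add: has_real_derivative_iff_has_vector_derivative)
qed

locale NL =
  fixes a b :: "real^'n" and \<epsilon> :: real and phi :: "real \<times> (real^'n) \<times> real \<Rightarrow> real"
    and phi' :: "real \<times> (real^'n) \<times> real \<Rightarrow> (real \<times> (real^'n) \<times> real) \<Rightarrow>\<^sub>L real"
    and phi'' :: "real \<times> (real^'n) \<times> real \<Rightarrow> (real \<times> (real^'n) \<times> real) \<Rightarrow>\<^sub>L ((real \<times> (real^'n) \<times> real) \<Rightarrow>\<^sub>L real)"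
    and y :: "real^'n \<Rightarrow> real" and y' :: "real^'n \<Rightarrow> (real^'n) \<Rightarrow>\<^sub>L real"
  assumes box: "\<forall>i. a$i < b$i" and eps: "\<epsilon> > 0"
    and phi': "\<forall>p\<in>{-\<epsilon>..\<epsilon>} \<times> cbox a b \<times> UNIV. (phi has_derivative blinfun_apply (phi' p)) (at p within {-\<epsilon>..\<epsilon>} \<times> cbox a b \<times> UNIV)"
    and phi'': "\<forall>p\<in>{-\<epsilon>..\<epsilon>} \<times> cbox a b \<times> UNIV. (phi' has_derivative blinfun_apply (phi'' p)) (at p within {-\<epsilon>..\<epsilon>} \<times> cbox a b \<times> UNIV)"
    and phi''c: "continuous_on ({-\<epsilon>..\<epsilon>} \<times> cbox a b \<times> UNIV) phi''"
    and y': "\<forall>r\<in>cbox a b. (y has_derivative blinfun_apply (y' r)) (at r within cbox a b)"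
    and y'c: "continuous_on (cbox a b) y'"

context NL
begin

lemma yc: "continuous_on (cbox a b) y"
  apply (rule has_derivative_continuous_on[of _ _ "\<lambda>p. blinfun_apply (y' p)"]) using y' by blast

lemma phic: "continuous_on ({-\<epsilon>..\<epsilon>} \<times> cbox a b \<times> UNIV) phi"
  apply (rule has_derivative_continuous_on[of _ _ "\<lambda>p. blinfun_apply (phi' p)"]) using phi' by blast

lemma phi'c: "continuous_on ({-\<epsilon>..\<epsilon>} \<times> cbox a b \<times> UNIV) phi'"
  apply (rule has_derivative_continuous_on[of _ _ "\<lambda>p. blinfun_apply (phi'' p)"]) using phi'' by blast

lemma e1_app: "blinfun_apply L ((h::real), 0::real^'n, 0::real) = h *\<^sub>R blinfun_apply L (1, 0, 0)"
  using blinfun.scaleR_right[of L h "(1, 0, 0)"] by simp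

lemma phi_theta:
  assumes r: "r \<in> cbox a b" and s: "s \<in> {-\<epsilon>..\<epsilon>}"
  shows "((\<lambda>\<theta>. phi (\<theta>, r, x)) has_derivative (\<lambda>h. h *\<^sub>R blinfun_apply (phi' (s, r, x)) (1, 0, 0))) (at s within {-\<epsilon>..\<epsilon>})"
proof -
  have "((\<lambda>\<theta>. phi (\<theta>, r, x)) has_derivative (\<lambda>h. blinfun_apply (phi' (s, r, x)) (h, 0, 0))) (at s within {-\<epsilon>..\<epsilon>})"
    apply (rule has_derivative_in_compose2[of "{-\<epsilon>..\<epsilon>} \<times> cbox a b \<times> UNIV" phi "\<lambda>p. blinfun_apply (phi' p)" "\<lambda>\<theta>. (\<theta>, r, x)"])
    using phi' apply blast
    using r apply force
    using s apply simp
    by (intro has_derivative_Pair has_derivative_ident has_derivative_const)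
  then show ?thesis by (rule has_derivative_eq_rhs) (rule ext, rule e1_app)
qed

lemma phi'_theta:
  assumes r: "r \<in> cbox a b" and s: "s \<in> {-\<epsilon>..\<epsilon>}"
  shows "((\<lambda>\<theta>. blinfun_apply (phi' (\<theta>, r, x)) V) has_derivative
           (\<lambda>h. h *\<^sub>R blinfun_apply (blinfun_apply (phi'' (s, r, x)) (1, 0, 0)) V)) (at s within {-\<epsilon>..\<epsilon>})"
proof -
  have "((\<lambda>\<theta>. phi' (\<theta>, r, x)) has_derivative (\<lambda>h. blinfun_apply (phi'' (s, r, x)) (h, 0, 0))) (at s within {-\<epsilon>..\<epsilon>})"
    apply (rule has_derivative_in_compose2[of "{-\<epsilon>..\<epsilon>} \<times> cbox a b \<times> UNIV" phi' "\<lambda>p. blinfun_apply (phi'' p)" "\<lambda>\<theta>. (\<theta>, r, x)"])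
    using phi'' apply blast
    using r apply force
    using s apply simp
    by (intro has_derivative_Pair has_derivative_ident has_derivative_const)
  then have "((\<lambda>\<theta>. phi' (\<theta>, r, x)) has_derivative (\<lambda>h. h *\<^sub>R blinfun_apply (phi'' (s, r, x)) (1, 0, 0))) (at s within {-\<epsilon>..\<epsilon>})"
    by (rule has_derivative_eq_rhs) (rule ext, rule e1_app)
  from blinfun.FDERIV[OF this has_derivative_const[of V]]
  show ?thesis by (simp add: blinfun.scaleR_left)
qed

lemma xi_eq:
  assumes r: "r \<in> cbox a b"
  shows "xi phi r x = blinfun_apply (phi' (0, r, x)) (1, 0, 0)"
proof -
  have "((\<lambda>\<theta>. phi (\<theta>, r, x)) has_derivative (\<lambda>h. h *\<^sub>R blinfun_apply (phi' (0, r, x)) (1, 0, 0))) (at 0)"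
    using phi_theta[OF r, of 0 x] eps at_within_interior[of 0 "{-\<epsilon>..\<epsilon>}"] by simp
  then have "((\<lambda>\<theta>. phi (\<theta>, r, x)) has_real_derivative blinfun_apply (phi' (0, r, x)) (1, 0, 0)) (at 0)"
    by (rule has_derivative_imp_has_field_derivative) simp
  then show ?thesis unfolding xi_def by (rule DERIV_imp_deriv)
qed

lemma lift_cont: "continuous_on ({-\<epsilon>..\<epsilon>} \<times> cbox a b) (\<lambda>p. (fst p, snd p, y (snd p)))"
  by (intro continuous_intros continuous_on_compose2[OF yc]) auto

lemma lift_in: "p \<in> {-\<epsilon>..\<epsilon>} \<times> cbox a b \<Longrightarrow> (fst p, snd p, y (snd p)) \<in> {-\<epsilon>..\<epsilon>} \<times> cbox a b \<times> UNIV"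
  by auto

lemma lift_comp:
  assumes "continuous_on ({-\<epsilon>..\<epsilon>} \<times> cbox a b \<times> UNIV) G"
  shows "continuous_on ({-\<epsilon>..\<epsilon>} \<times> cbox a b) (\<lambda>p. G (fst p, snd p, y (snd p)))"
  by (rule continuous_on_compose2[OF assms lift_cont]) auto

lemma uc_lemma:
  fixes \<psi> :: "real \<times> (real^'n) \<Rightarrow> 'z::real_normed_vector"
  assumes c: "continuous_on ({-\<epsilon>..\<epsilon>} \<times> cbox a b) \<psi>"
  shows "\<forall>e>0. \<exists>d>0. \<forall>r\<in>cbox a b. \<forall>s\<in>{-\<epsilon>..\<epsilon>}. \<bar>s\<bar> < d \<longrightarrow> norm (\<psi> (s, r) - \<psi> (0, r)) < e"
proof (intro allI impI)
  fix e :: real assume e: "e > 0"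
  have "uniformly_continuous_on ({-\<epsilon>..\<epsilon>} \<times> cbox a b) \<psi>"
    by (rule compact_uniformly_continuous[OF c]) (intro compact_Times compact_Icc compact_cbox)
  then obtain d where d: "d > 0" "\<forall>x\<in>{-\<epsilon>..\<epsilon>} \<times> cbox a b. \<forall>x'\<in>{-\<epsilon>..\<epsilon>} \<times> cbox a b. dist x' x < d \<longrightarrow> dist (\<psi> x') (\<psi> x) < e"
    unfolding uniformly_continuous_on_def using e by blast
  show "\<exists>d>0. \<forall>r\<in>cbox a b. \<forall>s\<in>{-\<epsilon>..\<epsilon>}. \<bar>s\<bar> < d \<longrightarrow> norm (\<psi> (s, r) - \<psi> (0, r)) < e"
  proof (intro exI[of _ d] conjI ballI impI)
    fix r s assume r: "r \<in> cbox a b" and s: "s \<in> {-\<epsilon>..\<epsilon>}" and sd: "\<bar>s\<bar> < d"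
    have "dist (s, r) (0, r) < d" using sd by (simp add: dist_Pair_Pair)
    then show "norm (\<psi> (s, r) - \<psi> (0, r)) < e"
      using d(2) r s eps by (auto simp: dist_norm)
  qed (rule d(1))
qed

lemma z_cont: "\<theta> \<in> {-\<epsilon>..\<epsilon>} \<Longrightarrow> continuous_on (cbox a b) (\<lambda>r. phi (\<theta>, r, y r))"
  by (rule continuous_on_compose2[OF phic]) (auto intro!: continuous_intros yc)

lemma phi'y_cont: "\<theta> \<in> {-\<epsilon>..\<epsilon>} \<Longrightarrow> continuous_on (cbox a b) (\<lambda>r. phi' (\<theta>, r, y r))"
  by (rule continuous_on_compose2[OF phi'c]) (auto intro!: continuous_intros yc)

lemma V_cont: "continuous_on (cbox a b) (\<lambda>r. (0::real, axis i (1::real), blinfun_apply (y' r) (axis i 1)))"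
  by (intro continuous_intros blinfun.continuous_on y'c)

lemma W_cont: "continuous_on (cbox a b) (\<lambda>r. blinfun_apply (blinfun_apply (phi'' (0, r, y r)) (1,0,0)) (0::real, axis i (1::real), blinfun_apply (y' r) (axis i 1)))"
proof -
  have "continuous_on (cbox a b) (\<lambda>r. phi'' (0, r, y r))"
    by (rule continuous_on_compose2[OF phi''c]) (use eps in \<open>auto intro!: continuous_intros yc\<close>)
  then show ?thesis
    by (intro blinfun.continuous_on V_cont continuous_on_const)
qed

lemma xiy_cont: "continuous_on (cbox a b) (\<lambda>r. blinfun_apply (phi' (0, r, y r)) (1,0,0))"
  by (intro blinfun.continuous_on phi'y_cont continuous_on_const) (use eps in auto)

lemma z_unif: "\<forall>e>0. \<forall>\<^sub>F \<theta> in at 0 within {-\<epsilon>..\<epsilon>}. \<forall>r\<in>cbox a b.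
   \<bar>phi (\<theta>, r, y r) - phi (0, r, y r) - \<theta> * blinfun_apply (phi' (0, r, y r)) (1, 0, 0)\<bar> \<le> e * \<bar>\<theta>\<bar>"
proof -
  have "\<forall>e>0. \<forall>\<^sub>F \<theta> in at 0 within {-\<epsilon>..\<epsilon>}. \<forall>r\<in>cbox a b.
   norm (phi (\<theta>, r, y r) - phi (0, r, y r) - \<theta> *\<^sub>R blinfun_apply (phi' (0, r, y r)) (1, 0, 0)) \<le> e * \<bar>\<theta>\<bar>"
  proof (rule unif_diff[OF eps, where g="\<lambda>\<theta> r. phi (\<theta>, r, y r)" and g'="\<lambda>s r. blinfun_apply (phi' (s, r, y r)) (1, 0, 0)"])
    show "\<forall>c\<in>cbox a b. \<forall>s\<in>{- \<epsilon>..\<epsilon>}. ((\<lambda>\<theta>. phi (\<theta>, c, y c)) has_derivative (\<lambda>h. h *\<^sub>R blinfun_apply (phi' (s, c, y c)) (1, 0, 0))) (at s within {- \<epsilon>..\<epsilon>})"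
      using phi_theta by blast
    have uc: "\<forall>e>0. \<exists>d>0. \<forall>r\<in>cbox a b. \<forall>s\<in>{-\<epsilon>..\<epsilon>}. \<bar>s\<bar> < d \<longrightarrow> norm (phi' (s, r, y r) - phi' (0, r, y r)) < e"
      using uc_lemma[OF lift_comp[OF phi'c]] by simp
    show "\<forall>e>0. \<exists>d>0. \<forall>c\<in>cbox a b. \<forall>s\<in>{- \<epsilon>..\<epsilon>}. \<bar>s\<bar> < d \<longrightarrow>
        norm (blinfun_apply (phi' (s, c, y c)) (1, 0, 0) - blinfun_apply (phi' (0, c, y c)) (1, 0, 0)) \<le> e"
    proof (intro allI impI)
      fix e :: real assume e: "e > 0"
      then obtain d where d: "d > 0" "\<forall>r\<in>cbox a b. \<forall>s\<in>{-\<epsilon>..\<epsilon>}. \<bar>s\<bar> < d \<longrightarrow> norm (phi' (s, r, y r) - phi' (0, r, y r)) < e"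
        using uc by blast
      show "\<exists>d>0. \<forall>c\<in>cbox a b. \<forall>s\<in>{- \<epsilon>..\<epsilon>}. \<bar>s\<bar> < d \<longrightarrow>
        norm (blinfun_apply (phi' (s, c, y c)) (1, 0, 0) - blinfun_apply (phi' (0, c, y c)) (1, 0, 0)) \<le> e"
      proof (intro exI[of _ d] conjI ballI impI)
        fix c s assume "c \<in> cbox a b" "s \<in> {-\<epsilon>..\<epsilon>}" "\<bar>s\<bar> < d"
        then have lt: "norm (phi' (s, c, y c) - phi' (0, c, y c)) < e" using d by blast
        have "norm (blinfun_apply (phi' (s, c, y c)) (1, 0, 0) - blinfun_apply (phi' (0, c, y c)) (1, 0, 0))
            = norm (blinfun_apply (phi' (s, c, y c) - phi' (0, c, y c)) ((1::real), (0::real^'n), (0::real)))"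
          by (simp add: blinfun.diff_left)
        also have "\<dots> \<le> norm (phi' (s, c, y c) - phi' (0, c, y c)) * norm ((1::real), (0::real^'n), (0::real))"
          by (rule norm_blinfun)
        also have "\<dots> \<le> e" using lt by (simp add: norm_Pair)
        finally show "norm (blinfun_apply (phi' (s, c, y c)) (1, 0, 0) - blinfun_apply (phi' (0, c, y c)) (1, 0, 0)) \<le> e" .
      qed (rule d(1))
    qed
  qed
  then show ?thesis by simp
qed

end

context NL begin
lemma V_bound: "\<exists>Vm>0. \<forall>r\<in>cbox a b. norm ((0::real, axis i (1::real), blinfun_apply (y' r) (axis i 1))) \<le> Vm"
  using bounded_pos[THEN iffD1, OF compact_imp_bounded[OF compact_continuous_image[OF V_cont compact_cbox]]]
  by auto

end

context NL begin
lemma W_unif: "\<forall>e>0. \<forall>\<^sub>F \<theta> in at 0 within {-\<epsilon>..\<epsilon>}. \<forall>r\<in>cbox a b.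
   \<bar>blinfun_apply (phi' (\<theta>, r, y r)) (0::real, axis i (1::real), blinfun_apply (y' r) (axis i 1))
    - blinfun_apply (phi' (0, r, y r)) (0::real, axis i (1::real), blinfun_apply (y' r) (axis i 1))
    - \<theta> * blinfun_apply (blinfun_apply (phi'' (0, r, y r)) (1,0,0)) (0::real, axis i (1::real), blinfun_apply (y' r) (axis i 1))\<bar> \<le> e * \<bar>\<theta>\<bar>"
proof -
  define V where "V r = (0::real, axis i (1::real), blinfun_apply (y' r) (axis i 1))" for r
  obtain Vm where Vm: "Vm > 0" "\<forall>r\<in>cbox a b. norm (V r) \<le> Vm" using V_bound[of i] unfolding V_def by blast
  have "\<forall>e>0. \<forall>\<^sub>F \<theta> in at 0 within {-\<epsilon>..\<epsilon>}. \<forall>r\<in>cbox a b.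
   norm (blinfun_apply (phi' (\<theta>, r, y r)) (V r) - blinfun_apply (phi' (0, r, y r)) (V r)
     - \<theta> *\<^sub>R blinfun_apply (blinfun_apply (phi'' (0, r, y r)) (1,0,0)) (V r)) \<le> e * \<bar>\<theta>\<bar>"
  proof (rule unif_diff[OF eps, where g="\<lambda>\<theta> r. blinfun_apply (phi' (\<theta>, r, y r)) (V r)"
                                and g'="\<lambda>s r. blinfun_apply (blinfun_apply (phi'' (s, r, y r)) (1,0,0)) (V r)"])
    show "\<forall>c\<in>cbox a b. \<forall>s\<in>{- \<epsilon>..\<epsilon>}. ((\<lambda>\<theta>. blinfun_apply (phi' (\<theta>, c, y c)) (V c)) has_derivative
       (\<lambda>h. h *\<^sub>R blinfun_apply (blinfun_apply (phi'' (s, c, y c)) (1,0,0)) (V c))) (at s within {- \<epsilon>..\<epsilon>})"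
      by (intro ballI phi'_theta)
    have uc: "\<forall>e>0. \<exists>d>0. \<forall>r\<in>cbox a b. \<forall>s\<in>{-\<epsilon>..\<epsilon>}. \<bar>s\<bar> < d \<longrightarrow> norm (phi'' (s, r, y r) - phi'' (0, r, y r)) < e"
      using uc_lemma[OF lift_comp[OF phi''c]] by simp
    show "\<forall>e>0. \<exists>d>0. \<forall>c\<in>cbox a b. \<forall>s\<in>{- \<epsilon>..\<epsilon>}. \<bar>s\<bar> < d \<longrightarrow>
        norm (blinfun_apply (blinfun_apply (phi'' (s, c, y c)) (1,0,0)) (V c) - blinfun_apply (blinfun_apply (phi'' (0, c, y c)) (1,0,0)) (V c)) \<le> e"
    proof (intro allI impI)
      fix e :: real assume e: "e > 0"
      then obtain d where d: "d > 0" "\<forall>r\<in>cbox a b. \<forall>s\<in>{-\<epsilon>..\<epsilon>}. \<bar>s\<bar> < d \<longrightarrow> norm (phi'' (s, r, y r) - phi'' (0, r, y r)) < e / Vm"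
        using uc[rule_format, of "e / Vm"] Vm e by auto
      show "\<exists>d>0. \<forall>c\<in>cbox a b. \<forall>s\<in>{- \<epsilon>..\<epsilon>}. \<bar>s\<bar> < d \<longrightarrow>
        norm (blinfun_apply (blinfun_apply (phi'' (s, c, y c)) (1,0,0)) (V c) - blinfun_apply (blinfun_apply (phi'' (0, c, y c)) (1,0,0)) (V c)) \<le> e"
      proof (intro exI[of _ d] conjI ballI impI)
        fix c s assume cs: "c \<in> cbox a b" "s \<in> {-\<epsilon>..\<epsilon>}" "\<bar>s\<bar> < d"
        then have lt: "norm (phi'' (s, c, y c) - phi'' (0, c, y c)) < e / Vm" using d by blast
        have "norm (blinfun_apply (blinfun_apply (phi'' (s, c, y c)) (1,0,0)) (V c) - blinfun_apply (blinfun_apply (phi'' (0, c, y c)) (1,0,0)) (V c))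
            = norm (blinfun_apply (blinfun_apply (phi'' (s, c, y c) - phi'' (0, c, y c)) ((1::real), (0::real^'n), (0::real))) (V c))"
          by (simp add: blinfun.diff_left)
        also have "\<dots> \<le> norm (blinfun_apply (phi'' (s, c, y c) - phi'' (0, c, y c)) ((1::real), (0::real^'n), (0::real))) * norm (V c)"
          by (rule norm_blinfun)
        also have "\<dots> \<le> (norm (phi'' (s, c, y c) - phi'' (0, c, y c)) * norm ((1::real), (0::real^'n), (0::real))) * Vm"
          by (rule mult_mono[OF norm_blinfun]) (use Vm cs in auto)
        also have "\<dots> \<le> (e / Vm) * Vm" using lt Vm by (intro mult_right_mono) (auto simp: norm_Pair)
        also have "\<dots> = e" using Vm by simp
        finally show "norm (blinfun_apply (blinfun_apply (phi'' (s, c, y c)) (1,0,0)) (V c) - blinfun_apply (blinfun_apply (phi'' (0, c, y c)) (1,0,0)) (V c)) \<le> e" .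
      qed (rule d(1))
    qed
  qed
  then show ?thesis unfolding V_def by simp
qed

end

context NL begin
lemma L_line:
  assumes r: "r \<in> cbox a b" and s: "s \<in> {a$i..b$i}" and th: "\<theta> \<in> {-\<epsilon>..\<epsilon>}"
  shows "((\<lambda>s. phi (\<theta>, upd r i s, y (upd r i s))) has_real_derivative
     blinfun_apply (phi' (\<theta>, upd r i s, y (upd r i s))) (0::real, axis i (1::real), blinfun_apply (y' (upd r i s)) (axis i 1)))
     (at s within {a$i..b$i})"
proof -
  let ?q = "upd r i s"
  have q: "?q \<in> cbox a b" using upd_in_cbox[OF r s] .
  have dy: "((\<lambda>s. y (upd r i s)) has_derivative (\<lambda>h. blinfun_apply (y' ?q) (h *\<^sub>R axis i 1))) (at s within {a$i..b$i})"
    apply (rule has_derivative_in_compose2[of "cbox a b" y "\<lambda>x. blinfun_apply (y' x)"])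
    using y' apply blast
    using upd_in_cbox[OF r] apply blast
     apply (rule s)
    by (rule line_deriv)
  have dm: "((\<lambda>s. (\<theta>, upd r i s, y (upd r i s))) has_derivative (\<lambda>h. (0, h *\<^sub>R axis i 1, blinfun_apply (y' ?q) (h *\<^sub>R axis i 1)))) (at s within {a$i..b$i})"
    by (intro has_derivative_Pair has_derivative_const line_deriv dy)
  have "((\<lambda>s. phi (\<theta>, upd r i s, y (upd r i s))) has_derivative
     (\<lambda>h. blinfun_apply (phi' (\<theta>, ?q, y ?q)) (0, h *\<^sub>R axis i 1, blinfun_apply (y' ?q) (h *\<^sub>R axis i 1)))) (at s within {a$i..b$i})"
    apply (rule has_derivative_in_compose2[of "{-\<epsilon>..\<epsilon>} \<times> cbox a b \<times> UNIV" phi "\<lambda>p. blinfun_apply (phi' p)", OF _ _ s dm])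
    using phi' apply blast
    using upd_in_cbox[OF r] th by auto
  then show ?thesis
  proof (rule has_derivative_imp_has_field_derivative)
    fix h :: real
    have "((0::real), h *\<^sub>R axis i (1::real), blinfun_apply (y' ?q) (h *\<^sub>R axis i 1)) = h *\<^sub>R (0::real, axis i (1::real), blinfun_apply (y' ?q) (axis i 1))"
      by (simp add: blinfun.scaleR_right)
    then show "h * blinfun_apply (phi' (\<theta>, ?q, y ?q)) (0::real, axis i (1::real), blinfun_apply (y' ?q) (axis i 1)) =
      blinfun_apply (phi' (\<theta>, ?q, y ?q)) (0, h *\<^sub>R axis i 1, blinfun_apply (y' ?q) (h *\<^sub>R axis i 1))"
      by (simp only: blinfun.scaleR_right real_scaleR_def)
  qed
qed

lemma pd_z:
  assumes r: "r \<in> cbox a b" and th: "\<theta> \<in> {-\<epsilon>..\<epsilon>}"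
  shows "pd a b i (\<lambda>r. phi (\<theta>, r, y r)) r = blinfun_apply (phi' (\<theta>, r, y r)) (0::real, axis i (1::real), blinfun_apply (y' r) (axis i 1))"
proof -
  have ri: "r$i \<in> {a$i..b$i}" using r by (auto simp: mem_box_cart)
  have ab: "a$i < b$i" using box by blast
  show ?thesis using L_line[OF r ri th] unfolding pd_def
    using vector_derivative_within_cbox[of "a$i" "b$i" "r$i"] ab ri
    by (simp add: has_real_derivative_iff_has_vector_derivative)
qed

end

lemma seq_quot:
  fixes G :: "real \<Rightarrow> 'q \<Rightarrow> real"
  assumes U: "\<forall>e>0. \<forall>\<^sub>F \<theta> in at 0 within T. \<forall>q\<in>Q. \<bar>G \<theta> q - G0 q - \<theta> * H q\<bar> \<le> e * \<bar>\<theta>\<bar>"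
    and fl: "filterlim \<theta>n (at 0 within T) sequentially"
  shows "\<forall>e>0. \<forall>\<^sub>F n in sequentially. \<forall>q\<in>Q. \<bar>(G (\<theta>n n) q - G0 q) / \<theta>n n - H q\<bar> \<le> e"
proof (intro allI impI)
  fix e :: real assume e: "e > 0"
  have ev1: "\<forall>\<^sub>F n in sequentially. \<forall>q\<in>Q. \<bar>G (\<theta>n n) q - G0 q - \<theta>n n * H q\<bar> \<le> e * \<bar>\<theta>n n\<bar>"
    using fl U e unfolding filterlim_iff by blast
  have ev2: "\<forall>\<^sub>F n in sequentially. \<theta>n n \<noteq> 0"
    using fl unfolding filterlim_at by (auto elim: eventually_mono)
  show "\<forall>\<^sub>F n in sequentially. \<forall>q\<in>Q. \<bar>(G (\<theta>n n) q - G0 q) / \<theta>n n - H q\<bar> \<le> e"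
    using ev1 ev2
  proof eventually_elim
    case (elim n)
    show ?case
    proof
      fix q assume q: "q \<in> Q"
      have "(G (\<theta>n n) q - G0 q) / \<theta>n n - H q = (G (\<theta>n n) q - G0 q - \<theta>n n * H q) / \<theta>n n"
        using elim(2) by (simp add: field_simps)
      then have "\<bar>(G (\<theta>n n) q - G0 q) / \<theta>n n - H q\<bar> = \<bar>G (\<theta>n n) q - G0 q - \<theta>n n * H q\<bar> / \<bar>\<theta>n n\<bar>"
        by simp
      also have "\<dots> \<le> e * \<bar>\<theta>n n\<bar> / \<bar>\<theta>n n\<bar>"
        using elim q by (intro divide_right_mono) auto
      also have "\<dots> = e" using elim(2) by simp
      finally show "\<bar>(G (\<theta>n n) q - G0 q) / \<theta>n n - H q\<bar> \<le> e" .
    qed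
  qed
qed

lemma seq_quot_lim:
  fixes F :: "nat \<Rightarrow> 'q \<Rightarrow> real"
  assumes U: "\<forall>e>0. \<forall>\<^sub>F n in sequentially. \<forall>q\<in>Q. \<bar>F n q - H q\<bar> \<le> e" and q: "q \<in> Q"
  shows "(\<lambda>n. F n q) \<longlonglongrightarrow> H q"
  unfolding tendsto_iff
proof (intro allI impI)
  fix e :: real assume "e > 0"
  then have "\<forall>\<^sub>F n in sequentially. \<forall>q\<in>Q. \<bar>F n q - H q\<bar> \<le> e/2" using U[rule_format, of "e/2"] by simp
  then show "\<forall>\<^sub>F n in sequentially. dist (F n q) (H q) < e"
    by eventually_elim (use q \<open>e > 0\<close> in \<open>auto simp: dist_real_def\<close>)
qed

context NL begin

lemma theta_seq: "filterlim (\<lambda>n. \<epsilon> / real (Suc n)) (at 0 within {-\<epsilon>..\<epsilon>}) sequentially"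
  unfolding filterlim_at
proof
  show "\<forall>\<^sub>F n in sequentially. \<epsilon> / real (Suc n) \<in> {-\<epsilon>..\<epsilon>} \<and> \<epsilon> / real (Suc n) \<noteq> 0"
    using eps by (auto simp: field_simps intro!: always_eventually)
  have "(\<lambda>n. \<epsilon> * inverse (real (Suc n))) \<longlonglongrightarrow> \<epsilon> * 0"
    by (intro tendsto_intros LIMSEQ_inverse_real_of_nat)
  then show "(\<lambda>n. \<epsilon> / real (Suc n)) \<longlonglongrightarrow> 0" by (simp add: divide_inverse)
qed

lemma pd_xiy:
  assumes r: "r \<in> cbox a b"
  shows "pd a b i (\<lambda>r. blinfun_apply (phi' (0, r, y r)) (1, 0, 0)) r =
     blinfun_apply (blinfun_apply (phi'' (0, r, y r)) (1,0,0)) (0::real, axis i (1::real), blinfun_apply (y' r) (axis i 1))"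
proof -
  define I where "I = {a$i..b$i}"
  define tn where "tn n = \<epsilon> / real (Suc n)" for n
  define P where "P \<theta> q = blinfun_apply (phi' (\<theta>, q, y q)) (0::real, axis i (1::real), blinfun_apply (y' q) (axis i 1))" for \<theta> q
  define W where "W q = blinfun_apply (blinfun_apply (phi'' (0, q, y q)) (1,0,0)) (0::real, axis i (1::real), blinfun_apply (y' q) (axis i 1))" for q
  define X where "X q = blinfun_apply (phi' (0, q, y q)) (1, 0, 0)" for q
  define f where "f n s = (phi (tn n, upd r i s, y (upd r i s)) - phi (0, upd r i s, y (upd r i s))) / tn n" for n s
  have ri: "r$i \<in> I" using r by (auto simp: mem_box_cart I_def)
  have ab: "a$i < b$i" using box by blast
  have tnin: "tn n \<in> {-\<epsilon>..\<epsilon>}" for n unfolding tn_def using eps by (auto simp: field_simps)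
  have z0: "(0::real) \<in> {-\<epsilon>..\<epsilon>}" using eps by auto
  note fl = theta_seq[folded tn_def]
  have qin: "upd r i s \<in> cbox a b" if "s \<in> I" for s using upd_in_cbox[OF r] that I_def by auto
  have derf: "(f n has_derivative (\<lambda>h. h * ((P (tn n) (upd r i s) - P 0 (upd r i s)) / tn n))) (at s within I)"
    if "s \<in> I" for n s
  proof -
    have "(f n has_real_derivative (P (tn n) (upd r i s) - P 0 (upd r i s)) / tn n) (at s within I)"
      unfolding f_def P_def I_def
      by (intro DERIV_cdivide DERIV_diff L_line[OF r] tnin z0) (use that I_def in auto)
    then show ?thesis unfolding has_field_derivative_def
      by (rule has_derivative_eq_rhs) (rule ext, rule mult.commute)
  qed
  have UW: "\<forall>e>0. \<forall>\<^sub>F n in sequentially. \<forall>q\<in>cbox a b. \<bar>(P (tn n) q - P 0 q) / tn n - W q\<bar> \<le> e"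
    by (rule seq_quot[OF _ fl]) (use W_unif[of i] in \<open>simp add: P_def W_def\<close>)
  have UX: "\<forall>e>0. \<forall>\<^sub>F n in sequentially. \<forall>q\<in>cbox a b.
       \<bar>(phi (tn n, q, y q) - phi (0, q, y q)) / tn n - X q\<bar> \<le> e"
    by (rule seq_quot[OF _ fl]) (use z_unif in \<open>simp add: X_def\<close>)
  have limX: "(\<lambda>n. f n s) \<longlonglongrightarrow> X (upd r i s)" if "s \<in> I" for s
    unfolding f_def using seq_quot_lim[OF UX qin[OF that]] by simp
  have "\<exists>g. \<forall>s\<in>I. (\<lambda>n. f n s) \<longlonglongrightarrow> g s \<and> (g has_derivative (\<lambda>h. h * W (upd r i s))) (at s within I)"
  proof (rule has_derivative_sequence[OF _ derf _ ri limX[OF ri]])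
    show "convex I" unfolding I_def by simp
    fix e :: real assume e: "e > 0"
    show "\<forall>\<^sub>F n in sequentially. \<forall>s\<in>I. \<forall>h. norm (h * ((P (tn n) (upd r i s) - P 0 (upd r i s)) / tn n) - h * W (upd r i s)) \<le> e * norm h"
      using UW[rule_format, OF e]
    proof eventually_elim
      case (elim n)
      show ?case
      proof (intro ballI allI)
        fix s h assume s: "s \<in> I"
        have "\<bar>(P (tn n) (upd r i s) - P 0 (upd r i s)) / tn n - W (upd r i s)\<bar> \<le> e"
          using elim qin[OF s] by blast
        then have "\<bar>h\<bar> * \<bar>(P (tn n) (upd r i s) - P 0 (upd r i s)) / tn n - W (upd r i s)\<bar> \<le> \<bar>h\<bar> * e"
          by (rule mult_left_mono) simp
        then show "norm (h * ((P (tn n) (upd r i s) - P 0 (upd r i s)) / tn n) - h * W (upd r i s)) \<le> e * norm h"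
          by (simp only: real_norm_def right_diff_distrib[symmetric] abs_mult mult.commute[of e])
      qed
    qed
  qed
  then obtain g where g: "\<forall>s\<in>I. (\<lambda>n. f n s) \<longlonglongrightarrow> g s \<and> (g has_derivative (\<lambda>h. h * W (upd r i s))) (at s within I)"
    by blast
  have gX: "g s = X (upd r i s)" if "s \<in> I" for s
    using g that limX[OF that] LIMSEQ_unique by blast
  have "((\<lambda>s. X (upd r i s)) has_derivative (\<lambda>h. h * W (upd r i (r$i)))) (at (r$i) within I)"
  proof (rule has_derivative_transform_within[OF _ zero_less_one ri])
    show "(g has_derivative (\<lambda>h. h * W (upd r i (r$i)))) (at (r$i) within I)" using g ri by blast
  qed (use gX in auto)
  then have "((\<lambda>s. X (upd r i s)) has_field_derivative W r) (at (r$i) within I)"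
    by (rule has_derivative_imp_has_field_derivative) simp
  then have "((\<lambda>s. X (upd r i s)) has_vector_derivative W r) (at (r$i) within I)"
    by (simp add: has_real_derivative_iff_has_vector_derivative)
  then show ?thesis
    unfolding pd_def using vector_derivative_within_cbox[of "a$i" "b$i" "r$i"] ab ri
    by (simp add: I_def X_def W_def)
qed

end

lemma vec_as_sum: "(\<chi> i. c i) = (\<Sum>i\<in>UNIV. c i *\<^sub>R axis i (1::real))"
  using basis_expansion[of "\<chi> i. c i"] by (simp add: scalar_mult_eq_scaleR)

lemma vec_deriv:
  fixes f :: "real \<Rightarrow> 'n::finite \<Rightarrow> real"
  assumes "\<And>i. ((\<lambda>\<theta>. f \<theta> i) has_derivative (\<lambda>h. h * d i)) F"
  shows "((\<lambda>\<theta>. \<chi> i. f \<theta> i) has_derivative (\<lambda>h. h *\<^sub>R (\<chi> i. d i))) F"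
proof -
  have "((\<lambda>\<theta>. \<Sum>i\<in>UNIV. f \<theta> i *\<^sub>R axis i (1::real)) has_derivative (\<lambda>h. \<Sum>i\<in>UNIV. (h * d i) *\<^sub>R axis i (1::real))) F"
    by (intro has_derivative_sum has_derivative_scaleR_left assms)
  moreover have "(\<lambda>h. \<Sum>i\<in>UNIV. (h * d i) *\<^sub>R axis i (1::real)) = (\<lambda>h. h *\<^sub>R (\<chi> i. d i))"
    by (simp add: vec_as_sum scaleR_sum_right)
  ultimately show ?thesis by (simp add: vec_as_sum)
qed

context NL begin

lemma curve_deriv:
  fixes k :: "'n \<Rightarrow> real \<Rightarrow> real" and lam mu :: "'n \<Rightarrow> real"
  assumes kernel: "\<forall>i. k i absolutely_integrable_on {0 .. b $ i - a $ i}" and t: "t \<in> cbox a b"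
  shows "((\<lambda>\<theta>. starv a b lam mu k (\<lambda>r. phi (\<theta>, r, y r)) t) has_derivative (\<lambda>h. h *\<^sub>R
     (blinfun_apply (phi' (0, t, y t)) (1, 0, 0),
      \<chi> i. KP a b i (lam i) (mu i) (k i) (\<lambda>r. blinfun_apply (phi' (0, r, y r)) (1, 0, 0)) t,
      \<chi> i. blinfun_apply (blinfun_apply (phi'' (0, t, y t)) (1,0,0)) (0::real, axis i (1::real), blinfun_apply (y' t) (axis i 1)),
      \<chi> i. KP a b i (lam i) (mu i) (k i) (\<lambda>r. blinfun_apply (blinfun_apply (phi'' (0, r, y r)) (1,0,0)) (0::real, axis i (1::real), blinfun_apply (y' r) (axis i 1))) t,
      0))) (at 0 within {-\<epsilon>..\<epsilon>})"
proof -
  define T where "T = {-\<epsilon>..\<epsilon>}"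
  have z0: "(0::real) \<in> T" using eps by (auto simp: T_def)
  define P where "P i \<theta> q = blinfun_apply (phi' (\<theta>, q, y q)) (0::real, axis i (1::real), blinfun_apply (y' q) (axis i 1))" for i \<theta> q
  define W where "W i q = blinfun_apply (blinfun_apply (phi'' (0, q, y q)) (1,0,0)) (0::real, axis i (1::real), blinfun_apply (y' q) (axis i 1))" for i q
  define X where "X q = blinfun_apply (phi' (0, q, y q)) (1, 0, 0)" for q
  have pdz: "pd a b i (\<lambda>r. phi (\<theta>, r, y r)) q = P i \<theta> q" if "q \<in> cbox a b" "\<theta> \<in> T" for i \<theta> q
    using pd_z that unfolding P_def T_def by blast
  have d1: "((\<lambda>\<theta>. phi (\<theta>, t, y t)) has_derivative (\<lambda>h. h *\<^sub>R X t)) (at 0 within T)"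
    using phi_theta[OF t, of 0 "y t"] z0 unfolding X_def T_def by simp
  have d2: "((\<lambda>\<theta>. \<chi> i. KP a b i (lam i) (mu i) (k i) (\<lambda>r. phi (\<theta>, r, y r)) t) has_derivative
      (\<lambda>h. h *\<^sub>R (\<chi> i. KP a b i (lam i) (mu i) (k i) X t))) (at 0 within T)"
  proof (rule vec_deriv)
    fix i
    show "((\<lambda>\<theta>. KP a b i (lam i) (mu i) (k i) (\<lambda>r. phi (\<theta>, r, y r)) t) has_derivative (\<lambda>h. h * KP a b i (lam i) (mu i) (k i) X t)) (at 0 within T)"
      apply (rule KP_deriv[OF _ t, where w="\<lambda>\<theta> r. phi (\<theta>, r, y r)"])
      using kernel apply blast
      using z_cont unfolding T_def apply blast
      using xiy_cont unfolding X_def apply blast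
      using z0 unfolding T_def apply blast
      using z_unif unfolding X_def by simp
  qed
  have d3: "((\<lambda>\<theta>. \<chi> i. pd a b i (\<lambda>r. phi (\<theta>, r, y r)) t) has_derivative
      (\<lambda>h. h *\<^sub>R (\<chi> i. W i t))) (at 0 within T)"
  proof (rule vec_deriv)
    fix i
    have "((\<lambda>\<theta>. P i \<theta> t) has_derivative (\<lambda>h. h *\<^sub>R W i t)) (at 0 within T)"
      unfolding P_def W_def T_def by (rule phi'_theta[OF t]) (use z0 T_def in auto)
    then have "((\<lambda>\<theta>. P i \<theta> t) has_derivative (\<lambda>h. h * W i t)) (at 0 within T)" by simp
    then show "((\<lambda>\<theta>. pd a b i (\<lambda>r. phi (\<theta>, r, y r)) t) has_derivative (\<lambda>h. h * W i t)) (at 0 within T)"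
      by (rule has_derivative_transform_within[OF _ zero_less_one z0]) (use pdz t in auto)
  qed
  have d4: "((\<lambda>\<theta>. \<chi> i. BP a b i (lam i) (mu i) (k i) (\<lambda>r. phi (\<theta>, r, y r)) t) has_derivative
      (\<lambda>h. h *\<^sub>R (\<chi> i. KP a b i (lam i) (mu i) (k i) (W i) t))) (at 0 within T)"
  proof (rule vec_deriv)
    fix i
    show "((\<lambda>\<theta>. BP a b i (lam i) (mu i) (k i) (\<lambda>r. phi (\<theta>, r, y r)) t) has_derivative (\<lambda>h. h * KP a b i (lam i) (mu i) (k i) (W i) t)) (at 0 within T)"
      unfolding BP_def
    proof (rule KP_deriv[OF _ t, where w="\<lambda>\<theta>. pd a b i (\<lambda>r. phi (\<theta>, r, y r))"])
      show "k i absolutely_integrable_on {0..b $ i - a $ i}" using kernel by blast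
      show "\<forall>\<theta>\<in>T. continuous_on (cbox a b) (pd a b i (\<lambda>r. phi (\<theta>, r, y r)))"
      proof
        fix \<theta> assume th: "\<theta> \<in> T"
        have "continuous_on (cbox a b) (P i \<theta>)" unfolding P_def
          by (intro blinfun.continuous_on phi'y_cont V_cont) (use th T_def in auto)
        then show "continuous_on (cbox a b) (pd a b i (\<lambda>r. phi (\<theta>, r, y r)))"
          by (rule continuous_on_eq) (use pdz th in auto)
      qed
      show "continuous_on (cbox a b) (W i)" unfolding W_def by (rule W_cont)
      show "0 \<in> T" by (rule z0)
      show "\<forall>e>0. \<forall>\<^sub>F \<theta> in at 0 within T. \<forall>r\<in>cbox a b.
          \<bar>pd a b i (\<lambda>r. phi (\<theta>, r, y r)) r - pd a b i (\<lambda>r. phi (0, r, y r)) r - \<theta> * W i r\<bar> \<le> e * \<bar>\<theta>\<bar>"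
      proof (intro allI impI)
        fix e :: real assume e: "e > 0"
        have "\<forall>\<^sub>F \<theta> in at 0 within T. \<theta> \<in> T \<and> (\<forall>r\<in>cbox a b. \<bar>P i \<theta> r - P i 0 r - \<theta> * W i r\<bar> \<le> e * \<bar>\<theta>\<bar>)"
          apply (rule eventually_conj[OF ev_in_within])
          using W_unif[of i] e unfolding P_def W_def T_def by blast
        then show "\<forall>\<^sub>F \<theta> in at 0 within T. \<forall>r\<in>cbox a b.
          \<bar>pd a b i (\<lambda>r. phi (\<theta>, r, y r)) r - pd a b i (\<lambda>r. phi (0, r, y r)) r - \<theta> * W i r\<bar> \<le> e * \<bar>\<theta>\<bar>"
          by eventually_elim (use pdz z0 in auto)
      qed
    qed
  qed
  have d5: "((\<lambda>\<theta>. t) has_derivative (\<lambda>h. h *\<^sub>R 0)) (at 0 within T)" by simp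
  have "((\<lambda>\<theta>. starv a b lam mu k (\<lambda>r. phi (\<theta>, r, y r)) t) has_derivative (\<lambda>h. (h *\<^sub>R X t,
       h *\<^sub>R (\<chi> i. KP a b i (lam i) (mu i) (k i) X t), h *\<^sub>R (\<chi> i. W i t),
       h *\<^sub>R (\<chi> i. KP a b i (lam i) (mu i) (k i) (W i) t), h *\<^sub>R 0))) (at 0 within T)"
    unfolding starv_def by (intro has_derivative_Pair d1 d2 d3 d4 d5)
  then show ?thesis unfolding T_def X_def W_def by simp
qed

end

lemma final_alg:
  fixes X d1 :: real and A B C f2 f3 f4 KS P3 AP :: "'n::finite \<Rightarrow> real"
  assumes h1: "X * d1 + (\<Sum>i\<in>UNIV. A i * f2 i) + (\<Sum>i\<in>UNIV. B i * f3 i) + (\<Sum>i\<in>UNIV. C i * f4 i) = 0"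
    and h2: "d1 + (\<Sum>i\<in>UNIV. KS i - P3 i - AP i) = 0"
  shows "(\<Sum>i\<in>UNIV. (- X * KS i + f2 i * A i) + (B i * f3 i + X * P3 i) + (X * AP i + f4 i * C i)) = 0"
proof -
  have "(\<Sum>i\<in>UNIV. (- X * KS i + f2 i * A i) + (B i * f3 i + X * P3 i) + (X * AP i + f4 i * C i))
     = (\<Sum>i\<in>UNIV. A i * f2 i) + (\<Sum>i\<in>UNIV. B i * f3 i) + (\<Sum>i\<in>UNIV. C i * f4 i) - X * (\<Sum>i\<in>UNIV. KS i - P3 i - AP i)"
    by (simp add: sum.distrib sum_subtractf sum_distrib_left algebra_simps)
  also have "\<dots> = 0"
  proof -
    have "(\<Sum>i\<in>UNIV. KS i - P3 i - AP i) = - d1" using h2 by linarith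
    then show ?thesis using h1 by (simp add: algebra_simps)
  qed
  finally show ?thesis .
qed

lemma blin_expand:
  fixes L :: "(real \<times> (real^'n) \<times> (real^'n) \<times> (real^'n) \<times> (real^'n)) \<Rightarrow>\<^sub>L real"
  shows "blinfun_apply L (x1, x2, x3, x4, 0) =
    x1 * blinfun_apply L (1, 0, 0, 0, 0)
    + (\<Sum>i\<in>UNIV. x2$i * blinfun_apply L (0, axis i 1, 0, 0, 0))
    + (\<Sum>i\<in>UNIV. x3$i * blinfun_apply L (0, 0, axis i 1, 0, 0))
    + (\<Sum>i\<in>UNIV. x4$i * blinfun_apply L (0, 0, 0, axis i 1, 0))"
proof -
  have e: "(x1, x2, x3, x4, 0) = x1 *\<^sub>R (1, 0, 0, 0, 0)
    + (\<Sum>i\<in>UNIV. x2$i *\<^sub>R ((0::real), axis i (1::real), (0::real^'n), (0::real^'n), (0::real^'n)))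
    + (\<Sum>i\<in>UNIV. x3$i *\<^sub>R ((0::real), (0::real^'n), axis i (1::real), (0::real^'n), (0::real^'n)))
    + (\<Sum>i\<in>UNIV. x4$i *\<^sub>R ((0::real), (0::real^'n), (0::real^'n), axis i (1::real), (0::real^'n)))"
    by (simp add: prod_eq_iff fst_sum snd_sum vec_as_sum[symmetric])
  show ?thesis
    by (subst e) (simp only: blinfun.add_right blinfun.sum_right blinfun.scaleR_right real_scaleR_def)
qed

lemma dir_deriv:
  fixes F :: "real \<times> (real^'n) \<times> (real^'n) \<times> (real^'n) \<times> (real^'n) \<Rightarrow> real"
  assumes FD: "\<forall>p\<in>SF. (F has_derivative blinfun_apply (F' p)) (at p within SF)"
    and im: "range \<gamma> \<subseteq> SF" and g0: "\<gamma> s0 = p"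
    and gd: "(\<gamma> has_derivative (\<lambda>h. h *\<^sub>R u)) (at s0)"
  shows "deriv (\<lambda>s. F (\<gamma> s)) s0 = blinfun_apply (F' p) u"
proof -
  have "((\<lambda>s. F (\<gamma> s)) has_derivative (\<lambda>h. blinfun_apply (F' (\<gamma> s0)) (h *\<^sub>R u))) (at s0 within UNIV)"
    by (rule has_derivative_in_compose2[of SF F "\<lambda>p. blinfun_apply (F' p)"]) (use FD im gd in auto)
  then have "((\<lambda>s. F (\<gamma> s)) has_real_derivative blinfun_apply (F' p) u) (at s0)"
    by (rule has_derivative_imp_has_field_derivative) (simp add: g0 blinfun.scaleR_right)
  then show ?thesis by (rule DERIV_imp_deriv)
qed

lemma dF_ids:
  fixes F :: "real \<times> (real^'n) \<times> (real^'n) \<times> (real^'n) \<times> (real^'n) \<Rightarrow> real"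
  assumes FD: "\<forall>p\<in>UNIV \<times> UNIV \<times> UNIV \<times> UNIV \<times> C. (F has_derivative blinfun_apply (F' p)) (at p within UNIV \<times> UNIV \<times> UNIV \<times> UNIV \<times> C)"
    and tt: "tt \<in> C"
  shows "dF1 F (xa, xb, xc, xd, tt) = blinfun_apply (F' (xa, xb, xc, xd, tt)) (1, 0, 0, 0, 0)"
    and "dF2 F i (xa, xb, xc, xd, tt) = blinfun_apply (F' (xa, xb, xc, xd, tt)) (0, axis i 1, 0, 0, 0)"
    and "dF3 F i (xa, xb, xc, xd, tt) = blinfun_apply (F' (xa, xb, xc, xd, tt)) (0, 0, axis i 1, 0, 0)"
    and "dF4 F i (xa, xb, xc, xd, tt) = blinfun_apply (F' (xa, xb, xc, xd, tt)) (0, 0, 0, axis i 1, 0)"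
proof -
  have a: "upd xb i (xb$i) = xb" "upd xc i (xc$i) = xc" "upd xd i (xd$i) = xd" by simp_all
  have im1: "range (\<lambda>s. (s, xb, xc, xd, tt)) \<subseteq> UNIV \<times> UNIV \<times> UNIV \<times> UNIV \<times> C" using tt by auto
  have im2: "range (\<lambda>s. (xa, upd xb i s, xc, xd, tt)) \<subseteq> UNIV \<times> UNIV \<times> UNIV \<times> UNIV \<times> C" using tt by auto
  have im3: "range (\<lambda>s. (xa, xb, upd xc i s, xd, tt)) \<subseteq> UNIV \<times> UNIV \<times> UNIV \<times> UNIV \<times> C" using tt by auto
  have im4: "range (\<lambda>s. (xa, xb, xc, upd xd i s, tt)) \<subseteq> UNIV \<times> UNIV \<times> UNIV \<times> UNIV \<times> C" using tt by auto
  have g1: "((\<lambda>s. (s, xb, xc, xd, tt)) has_derivative (\<lambda>h. h *\<^sub>R (1, 0, 0, 0, 0))) (at xa)"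
  proof -
    have "((\<lambda>s. (s, xb, xc, xd, tt)) has_derivative (\<lambda>h. (h, 0, 0, 0, 0))) (at xa)"
      by (intro has_derivative_Pair has_derivative_ident has_derivative_const)
    then show ?thesis by (rule has_derivative_eq_rhs) (simp add: fun_eq_iff)
  qed
  have g2: "((\<lambda>s. (xa, upd xb i s, xc, xd, tt)) has_derivative (\<lambda>h. h *\<^sub>R (0, axis i 1, 0, 0, 0))) (at (xb$i))"
  proof -
    have "((\<lambda>s. (xa, upd xb i s, xc, xd, tt)) has_derivative (\<lambda>h. (0, h *\<^sub>R axis i 1, 0, 0, 0))) (at (xb$i))"
      by (intro has_derivative_Pair line_deriv has_derivative_const)
    then show ?thesis by (rule has_derivative_eq_rhs) (simp add: fun_eq_iff)
  qed
  have g3: "((\<lambda>s. (xa, xb, upd xc i s, xd, tt)) has_derivative (\<lambda>h. h *\<^sub>R (0, 0, axis i 1, 0, 0))) (at (xc$i))"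
  proof -
    have "((\<lambda>s. (xa, xb, upd xc i s, xd, tt)) has_derivative (\<lambda>h. (0, 0, h *\<^sub>R axis i 1, 0, 0))) (at (xc$i))"
      by (intro has_derivative_Pair line_deriv has_derivative_const)
    then show ?thesis by (rule has_derivative_eq_rhs) (simp add: fun_eq_iff)
  qed
  have g4: "((\<lambda>s. (xa, xb, xc, upd xd i s, tt)) has_derivative (\<lambda>h. h *\<^sub>R (0, 0, 0, axis i 1, 0))) (at (xd$i))"
  proof -
    have "((\<lambda>s. (xa, xb, xc, upd xd i s, tt)) has_derivative (\<lambda>h. (0, 0, 0, h *\<^sub>R axis i 1, 0))) (at (xd$i))"
      by (intro has_derivative_Pair line_deriv has_derivative_const)
    then show ?thesis by (rule has_derivative_eq_rhs) (simp add: fun_eq_iff)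
  qed
  show "dF1 F (xa, xb, xc, xd, tt) = blinfun_apply (F' (xa, xb, xc, xd, tt)) (1, 0, 0, 0, 0)"
    unfolding dF1_def prod.case by (rule dir_deriv[OF FD im1 _ g1]) simp
  show "dF2 F i (xa, xb, xc, xd, tt) = blinfun_apply (F' (xa, xb, xc, xd, tt)) (0, axis i 1, 0, 0, 0)"
    unfolding dF2_def prod.case by (rule dir_deriv[OF FD im2 _ g2]) (simp only: a)
  show "dF3 F i (xa, xb, xc, xd, tt) = blinfun_apply (F' (xa, xb, xc, xd, tt)) (0, 0, axis i 1, 0, 0)"
    unfolding dF3_def prod.case by (rule dir_deriv[OF FD im3 _ g3]) (simp only: a)
  show "dF4 F i (xa, xb, xc, xd, tt) = blinfun_apply (F' (xa, xb, xc, xd, tt)) (0, 0, 0, axis i 1, 0)"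
    unfolding dF4_def prod.case by (rule dir_deriv[OF FD im4 _ g4]) (simp only: a)
qed

theorem mainTheorem13:
  fixes a b :: "real^'n"
    and lam mu :: "'n \<Rightarrow> real"
    and k :: "'n \<Rightarrow> real \<Rightarrow> real"
    and F :: "real \<times> (real^'n) \<times> (real^'n) \<times> (real^'n) \<times> (real^'n) \<Rightarrow> real"
    and phi :: "real \<times> (real^'n) \<times> real \<Rightarrow> real"
    and \<epsilon> :: real
    and y :: "real^'n \<Rightarrow> real"
    and t :: "real^'n"
  assumes box: "\<forall>i. a $ i < b $ i"
    and kernel: "\<forall>i. k i absolutely_integrable_on {0 .. b $ i - a $ i}"
    and F_C1: "C1_on (UNIV \<times> UNIV \<times> UNIV \<times> UNIV \<times> cbox a b) F"
    and eps: "\<epsilon> > 0"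
    and phi_C2: "C2_on ({-\<epsilon> .. \<epsilon>} \<times> cbox a b \<times> UNIV) phi"
    and phi0: "\<forall>s\<in>cbox a b. \<forall>x. phi (0, s, x) = x"
    and inv_reg: "\<forall>z. admissible a b lam mu k z \<longrightarrow>
            C1_on (cbox a b) (\<lambda>s. xi phi s (z s)) \<and>
            (\<forall>i. continuous_on (cbox a b) (KP a b i (lam i) (mu i) (k i) (\<lambda>s. xi phi s (z s))) \<and>
                 continuous_on (cbox a b) (BP a b i (lam i) (mu i) (k i) (\<lambda>s. xi phi s (z s))))"
    and inv: "\<forall>z. admissible a b lam mu k z \<longrightarrow>
            (\<forall>\<theta>\<in>{-\<epsilon> .. \<epsilon>}. \<forall>s\<in>cbox a b.
               F (starv a b lam mu k z s) = F (starv a b lam mu k (\<lambda>r. phi (\<theta>, r, z r)) s))"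
    and ext: "gen_frac_extremal a b lam mu k F y"
    and t: "t \<in> box a b"
  shows "(\<Sum>i\<in>UNIV.
            II a b i (lam i) (mu i) (k i) (\<lambda>s. xi phi s (y s))
               (\<lambda>s. dF2 F i (starv a b lam mu k y s)) t
          + pd a b i (\<lambda>s. xi phi s (y s) * dF3 F i (starv a b lam mu k y s)) t
          + DD a b i (lam i) (mu i) (k i) (\<lambda>s. xi phi s (y s))
               (\<lambda>s. dF4 F i (starv a b lam mu k y s)) t) = 0"
proof -
  have tc: "t \<in> cbox a b" using t box_subset_cbox by blast
  have yadm: "admissible a b lam mu k y" using ext unfolding gen_frac_extremal_def by (rule conjunct1)
  have ext_all: "admissible a b lam mu k y \<and> (\<forall>i. continuous_on (cbox a b)
            (KPs a b i (lam i) (mu i) (k i) (\<lambda>s. dF2 F i (starv a b lam mu k y s))) \<and>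
          C1_on (cbox a b) (\<lambda>s. dF3 F i (starv a b lam mu k y s)) \<and>
          C1_on (cbox a b)
            (KPs a b i (lam i) (mu i) (k i) (\<lambda>s. dF4 F i (starv a b lam mu k y s)))) \<and> (\<forall>t\<in>box a b.
        dF1 F (starv a b lam mu k y t) +
        (\<Sum>i\<in>UNIV.
            KPs a b i (lam i) (mu i) (k i) (\<lambda>s. dF2 F i (starv a b lam mu k y s)) t
          - pd a b i (\<lambda>s. dF3 F i (starv a b lam mu k y s)) t
          - APs a b i (lam i) (mu i) (k i) (\<lambda>s. dF4 F i (starv a b lam mu k y s)) t) = 0)"
    using ext unfolding gen_frac_extremal_def .
  have ext2: "(\<forall>i. continuous_on (cbox a b)
            (KPs a b i (lam i) (mu i) (k i) (\<lambda>s. dF2 F i (starv a b lam mu k y s))) \<and>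
          C1_on (cbox a b) (\<lambda>s. dF3 F i (starv a b lam mu k y s)) \<and>
          C1_on (cbox a b)
            (KPs a b i (lam i) (mu i) (k i) (\<lambda>s. dF4 F i (starv a b lam mu k y s))))" by (rule ext_all[THEN conjunct2, THEN conjunct1])
  have ext3: "(\<forall>t\<in>box a b.
        dF1 F (starv a b lam mu k y t) +
        (\<Sum>i\<in>UNIV.
            KPs a b i (lam i) (mu i) (k i) (\<lambda>s. dF2 F i (starv a b lam mu k y s)) t
          - pd a b i (\<lambda>s. dF3 F i (starv a b lam mu k y s)) t
          - APs a b i (lam i) (mu i) (k i) (\<lambda>s. dF4 F i (starv a b lam mu k y s)) t) = 0)" by (rule ext_all[THEN conjunct2, THEN conjunct2])

  obtain y' where y': "\<forall>r\<in>cbox a b. (y has_derivative blinfun_apply (y' r)) (at r within cbox a b)"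
      and y'c: "continuous_on (cbox a b) y'"
    using yadm unfolding admissible_def C1_on_def by blast
  obtain phi' where phi': "\<forall>p\<in>{-\<epsilon>..\<epsilon>} \<times> cbox a b \<times> UNIV. (phi has_derivative blinfun_apply (phi' p)) (at p within {-\<epsilon>..\<epsilon>} \<times> cbox a b \<times> UNIV)"
      and phi'C1: "C1_on ({-\<epsilon>..\<epsilon>} \<times> cbox a b \<times> UNIV) phi'"
    using phi_C2 unfolding C2_on_def by blast
  obtain phi'' where phi'': "\<forall>p\<in>{-\<epsilon>..\<epsilon>} \<times> cbox a b \<times> UNIV. (phi' has_derivative blinfun_apply (phi'' p)) (at p within {-\<epsilon>..\<epsilon>} \<times> cbox a b \<times> UNIV)"
      and phi''c: "continuous_on ({-\<epsilon>..\<epsilon>} \<times> cbox a b \<times> UNIV) phi''"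
    using phi'C1 unfolding C1_on_def by blast
  obtain F' where F': "\<forall>p\<in>UNIV \<times> UNIV \<times> UNIV \<times> UNIV \<times> cbox a b. (F has_derivative blinfun_apply (F' p)) (at p within UNIV \<times> UNIV \<times> UNIV \<times> UNIV \<times> cbox a b)"
    using F_C1 unfolding C1_on_def by blast
  interpret NL a b \<epsilon> phi phi' phi'' y y'
    by unfold_locales (use box eps phi' phi'' phi''c y' y'c in auto)
  define X where "X r = blinfun_apply (phi' (0, r, y r)) (1, 0, 0)" for r
  define W where "W i r = blinfun_apply (blinfun_apply (phi'' (0, r, y r)) (1,0,0)) (0::real, axis i (1::real), blinfun_apply (y' r) (axis i 1))" for i r
  define XI where "XI s = xi phi s (y s)" for s
  define p0 where "p0 = starv a b lam mu k y t"
  define Dv where "Dv = (X t, \<chi> i. KP a b i (lam i) (mu i) (k i) X t, \<chi> i. W i t, \<chi> i. KP a b i (lam i) (mu i) (k i) (W i) t, 0::real^'n)"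
  define cv where "cv \<theta> = starv a b lam mu k (\<lambda>r. phi (\<theta>, r, y r)) t" for \<theta>
  have XIX: "\<forall>r\<in>cbox a b. XI r = X r" unfolding XI_def X_def using xi_eq by blast
  have pdX: "pd a b i X r = W i r" if "r \<in> cbox a b" for i r
    unfolding X_def W_def using pd_xiy[OF that] .
  have cd: "(cv has_derivative (\<lambda>h. h *\<^sub>R Dv)) (at 0 within {-\<epsilon>..\<epsilon>})"
    unfolding cv_def Dv_def X_def W_def using curve_deriv[OF kernel tc] .
  have cv0: "cv 0 = p0"
    unfolding cv_def p0_def by (rule starv_cong[OF tc]) (use phi0 in auto)
  have cvconst: "F (cv \<theta>) = F p0" if "\<theta> \<in> {-\<epsilon>..\<epsilon>}" for \<theta>
    using inv[rule_format, OF yadm that tc] unfolding cv_def p0_def by simp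
  have cvin: "cv ` {-\<epsilon>..\<epsilon>} \<subseteq> UNIV \<times> UNIV \<times> UNIV \<times> UNIV \<times> cbox a b"
    using tc unfolding cv_def starv_def by auto
  have d0: "((\<lambda>\<theta>. F (cv \<theta>)) has_derivative (\<lambda>h. blinfun_apply (F' (cv 0)) (h *\<^sub>R Dv))) (at 0 within {-\<epsilon>..\<epsilon>})"
  proof (rule has_derivative_in_compose2[of _ F "\<lambda>p. blinfun_apply (F' p)", OF _ cvin _ cd])
    show "0 \<in> {-\<epsilon>..\<epsilon>}" using eps by simp
  qed (use F' in blast)
  have int0: "0 \<in> interior {-\<epsilon>..\<epsilon>}" using eps by simp
  have d: "((\<lambda>\<theta>. F (cv \<theta>)) has_derivative (\<lambda>h. blinfun_apply (F' p0) (h *\<^sub>R Dv))) (at 0)"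
    using d0 unfolding cv0 at_within_interior[OF int0] .
  have "((\<lambda>\<theta>. F p0) has_derivative (\<lambda>h. blinfun_apply (F' p0) (h *\<^sub>R Dv))) (at 0)"
  proof (rule has_derivative_transform_within[OF d eps])
    fix x' :: real assume "dist x' 0 < \<epsilon>"
    then show "F (cv x') = F p0" using cvconst[of x'] by (simp add: dist_real_def abs_less_iff)
  qed simp
  then have "(\<lambda>h. blinfun_apply (F' p0) (h *\<^sub>R Dv)) = (\<lambda>h. 0)"
    by (rule has_derivative_unique[OF _ has_derivative_const])
  then have FD0: "blinfun_apply (F' p0) Dv = 0" by (drule_tac x=1 in fun_cong) simp
  obtain x1 x2 x3 x4 tt where p0e0: "p0 = (x1, x2, x3, x4, tt)" by (cases p0) auto
  have "tt = t" using p0e0 unfolding p0_def starv_def by simp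
  then have p0e: "p0 = (x1, x2, x3, x4, t)" using p0e0 by simp
  note ids = dF_ids[OF F' tc, where xa=x1 and xb=x2 and xc=x3 and xd=x4, folded p0e]
  have h1: "XI t * dF1 F p0 + (\<Sum>i\<in>UNIV. KP a b i (lam i) (mu i) (k i) XI t * dF2 F i p0)
      + (\<Sum>i\<in>UNIV. pd a b i XI t * dF3 F i p0) + (\<Sum>i\<in>UNIV. BP a b i (lam i) (mu i) (k i) XI t * dF4 F i p0) = 0"
  proof -
    have kp: "KP a b i (lam i) (mu i) (k i) XI t = KP a b i (lam i) (mu i) (k i) X t" for i
      by (rule KP_cong[OF tc XIX])
    have pdd: "pd a b i XI t = W i t" for i
      using pd_cong[OF tc XIX] pdX[OF tc] by simp
    have bp: "BP a b i (lam i) (mu i) (k i) XI t = KP a b i (lam i) (mu i) (k i) (W i) t" for i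
    proof -
      have "\<forall>r\<in>cbox a b. pd a b i XI r = W i r"
      proof
        fix r assume r: "r \<in> cbox a b"
        show "pd a b i XI r = W i r" using pd_cong[OF r XIX, of i] pdX[OF r, of i] by simp
      qed
      then show ?thesis unfolding BP_def by (rule KP_cong[OF tc])
    qed
    have E: "blinfun_apply (F' p0) Dv = X t * dF1 F p0 + (\<Sum>i\<in>UNIV. KP a b i (lam i) (mu i) (k i) X t * dF2 F i p0)
      + (\<Sum>i\<in>UNIV. W i t * dF3 F i p0) + (\<Sum>i\<in>UNIV. KP a b i (lam i) (mu i) (k i) (W i) t * dF4 F i p0)"
      unfolding Dv_def ids by (rule trans[OF blin_expand]) simp
    show ?thesis
      using FD0 unfolding E kp pdd bp XIX[rule_format, OF tc] .
  qed
  have h2: "dF1 F p0 + (\<Sum>i\<in>UNIV. KPs a b i (lam i) (mu i) (k i) (\<lambda>s. dF2 F i (starv a b lam mu k y s)) t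
          - pd a b i (\<lambda>s. dF3 F i (starv a b lam mu k y s)) t
          - APs a b i (lam i) (mu i) (k i) (\<lambda>s. dF4 F i (starv a b lam mu k y s)) t) = 0"
    using bspec[OF ext3 t] unfolding p0_def .
  have XIC1: "C1_on (cbox a b) XI" using inv_reg[rule_format, OF yadm, THEN conjunct1] unfolding XI_def .
  have F3C1: "C1_on (cbox a b) (\<lambda>s. dF3 F i (starv a b lam mu k y s))" for i
    using ext2[rule_format, of i, THEN conjunct2, THEN conjunct1] .
  have prod: "pd a b i (\<lambda>s. XI s * dF3 F i (starv a b lam mu k y s)) t
     = pd a b i XI t * dF3 F i p0 + XI t * pd a b i (\<lambda>s. dF3 F i (starv a b lam mu k y s)) t" for i
    using pd_mult[OF box[rule_format] XIC1 F3C1 tc] unfolding p0_def .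
  show ?thesis
    unfolding II_def DD_def XI_def[symmetric] prod
    unfolding p0_def[symmetric]
    by (rule final_alg[OF h1 h2])
qed

end
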